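(* Let $G$ be a graph with edge set $E$, $C\subseteq E$, and $k\ge1$. If $k=1$, then $C$ is a circuit of $M_1(G)$ iff $G\langle C\rangle$ is a bicycle. If $k\ge2$, then $C$ is a circuit of $M_k(G)$ if and only if there exist a circuit $C'$ of $M_{k-1}(G)$ and a subgraph $P$ of $G$ with $E(P)\cap C'=\emptyset$ such that $G\langle C\rangle=G\langle C'\rangle\cup P$, where $P$ is a path, a cycle, a lollipop, or a bicycle, and: (l,p) if $P$ is a lollipop or a path then $V(G\langle C'\rangle)\cap V(P)=End(P)$; (c) if $P$ is a cycle then $|V(G\langle C'\rangle)\cap V(P)|=1$; (b) if $P$ is a bicycle then $V(G\langle C'\rangle)\cap V(P)=\emptyset$.
   Context: Graphs are finite, may have loops and parallel edges. A leaf is a vertex incident to exactly one edge, which is not a loop. $\Delta H=|E(H)|-|V(H)|$. For $X\subseteq E$, $G\langle X\rangle$ is the subgraph with edge set $X$ and vertex set the vertices incident to edges of $X$. A cycle is a connected graph all of whose vertices have degree 2 (a loop contributes 2). A path with end vertices $x\neq y$ has at least one edge and $End(P)=\{x,y\}$. A lollipop is obtained from a cycle $C$ (possibly a loop) and a vertex-disjoint path with end vertices $y,x$ by identifying a vertex of $C$ with $y$; $End=\{x\}$. A bicycle is a connected graph with no leaves and $\Delta=1$. For $k\ge0$, $M_k(G)$ is the matroid on $E$ whose circuits are the inclusion-minimal members of $\{C\subseteq E:C\neq\emptyset,\ |C|=|V(G\langle C\rangle)|+k\}$. *)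

theory Defs
  imports Main
begin

text \<open>A multigraph (loops and parallel edges allowed) is given by a vertex set V,
an edge set E and an incidence map inc assigning to each edge its set of end vertices
(one vertex for a loop, two vertices otherwise).\<close>

definition graph :: "'v set \<Rightarrow> 'e set \<Rightarrow> ('e \<Rightarrow> 'v set) \<Rightarrow> bool" where
  "graph V E inc \<longleftrightarrow> finite V \<and> finite E \<and>
     (\<forall>e\<in>E. inc e \<subseteq> V \<and> (card (inc e) = 1 \<or> card (inc e) = 2))"

definition is_loop :: "('e \<Rightarrow> 'v set) \<Rightarrow> 'e \<Rightarrow> bool" where
  "is_loop inc e \<longleftrightarrow> card (inc e) = 1"

definition verts :: "('e \<Rightarrow> 'v set) \<Rightarrow> 'e set \<Rightarrow> 'v set" where
  "verts inc X = \<Union> (inc ` X)"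

definition is_subgraph :: "'v set \<Rightarrow> 'e set \<Rightarrow> ('e \<Rightarrow> 'v set) \<Rightarrow> 'v set \<Rightarrow> 'e set \<Rightarrow> bool" where
  "is_subgraph V E inc W F \<longleftrightarrow> W \<subseteq> V \<and> F \<subseteq> E \<and> (\<forall>e\<in>F. inc e \<subseteq> W)"

definition deg :: "('e \<Rightarrow> 'v set) \<Rightarrow> 'e set \<Rightarrow> 'v \<Rightarrow> nat" where
  "deg inc F v = (\<Sum>e\<in>{e\<in>F. v \<in> inc e}. if is_loop inc e then 2 else 1)"

definition connected_gr :: "('e \<Rightarrow> 'v set) \<Rightarrow> 'v set \<Rightarrow> 'e set \<Rightarrow> bool" where
  "connected_gr inc W F \<longleftrightarrow> W \<noteq> {} \<and>
     (\<forall>u\<in>W. \<forall>w\<in>W. (u, w) \<in> {(a, b). \<exists>e\<in>F. a \<in> inc e \<and> b \<in> inc e}\<^sup>*)"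

definition is_leaf :: "('e \<Rightarrow> 'v set) \<Rightarrow> 'e set \<Rightarrow> 'v \<Rightarrow> bool" where
  "is_leaf inc F v \<longleftrightarrow> (\<exists>e. {f\<in>F. v \<in> inc f} = {e} \<and> \<not> is_loop inc e)"

definition finite_gr :: "('e \<Rightarrow> 'v set) \<Rightarrow> 'v set \<Rightarrow> 'e set \<Rightarrow> bool" where
  "finite_gr inc W F \<longleftrightarrow> finite W \<and> finite F \<and> (\<forall>e\<in>F. inc e \<subseteq> W)"

definition is_cycle :: "('e \<Rightarrow> 'v set) \<Rightarrow> 'v set \<Rightarrow> 'e set \<Rightarrow> bool" where
  "is_cycle inc W F \<longleftrightarrow> finite_gr inc W F \<and> connected_gr inc W F \<and> (\<forall>v\<in>W. deg inc F v = 2)"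

definition is_bicycle :: "('e \<Rightarrow> 'v set) \<Rightarrow> 'v set \<Rightarrow> 'e set \<Rightarrow> bool" where
  "is_bicycle inc W F \<longleftrightarrow> finite_gr inc W F \<and> connected_gr inc W F \<and>
     (\<forall>v\<in>W. \<not> is_leaf inc F v) \<and> int (card F) - int (card W) = 1"

definition is_path :: "('e \<Rightarrow> 'v set) \<Rightarrow> 'v set \<Rightarrow> 'e set \<Rightarrow> 'v \<Rightarrow> 'v \<Rightarrow> bool" where
  "is_path inc W F x y \<longleftrightarrow> x \<noteq> y \<and>
     (\<exists>vs es. es \<noteq> [] \<and> length vs = length es + 1 \<and> distinct vs \<and> distinct es \<and>
        hd vs = x \<and> last vs = y \<and>
        (\<forall>i<length es. inc (es ! i) = {vs ! i, vs ! Suc i}) \<and>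
        W = set vs \<and> F = set es)"

definition is_lollipop :: "('e \<Rightarrow> 'v set) \<Rightarrow> 'v set \<Rightarrow> 'e set \<Rightarrow> 'v \<Rightarrow> bool" where
  "is_lollipop inc W F x \<longleftrightarrow>
     (\<exists>W1 F1 W2 F2 y. is_cycle inc W1 F1 \<and> is_path inc W2 F2 y x \<and>
        W1 \<inter> W2 = {y} \<and> F1 \<inter> F2 = {} \<and> W = W1 \<union> W2 \<and> F = F1 \<union> F2)"

definition Mk_circuit :: "'e set \<Rightarrow> ('e \<Rightarrow> 'v set) \<Rightarrow> nat \<Rightarrow> 'e set \<Rightarrow> bool" where
  "Mk_circuit E inc k C \<longleftrightarrow>
     (let S = {D. D \<subseteq> E \<and> D \<noteq> {} \<and> card D = card (verts inc D) + k}
      in C \<in> S \<and> (\<forall>D\<in>S. D \<subseteq> C \<longrightarrow> D = C))"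

end

theory Submission
  imports Defs
begin

definition wf_edges :: "('e \<Rightarrow> 'v set) \<Rightarrow> 'e set \<Rightarrow> bool" where
  "wf_edges inc F \<longleftrightarrow> finite F \<and> (\<forall>e\<in>F. card (inc e) = 1 \<or> card (inc e) = 2)"

definition cw :: "('e \<Rightarrow> 'v set) \<Rightarrow> 'e \<Rightarrow> nat" where
  "cw inc e = (if is_loop inc e then 2 else 1)"

definition nosplitU :: "('e \<Rightarrow> 'v set) \<Rightarrow> 'v set \<Rightarrow> 'e set \<Rightarrow> bool" where
  "nosplitU inc U F \<longleftrightarrow> \<not>(\<exists>Q R. Q \<union> R = F \<and> Q \<inter> R = {} \<and> Q \<noteq> {} \<and> R \<noteq> {} \<and>
      verts inc Q \<inter> verts inc R \<subseteq> U)"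

lemma nosplitU_E:
  assumes "nosplitU inc U F" "Q \<union> R = F" "Q \<inter> R = {}" "Q \<noteq> {}" "R \<noteq> {}"
    "verts inc Q \<inter> verts inc R \<subseteq> U"
  shows False
proof -
  have "\<exists>Q' R'. Q' \<union> R' = F \<and> Q' \<inter> R' = {} \<and> Q' \<noteq> {} \<and> R' \<noteq> {} \<and> verts inc Q' \<inter> verts inc R' \<subseteq> U"
    apply (rule exI[where x=Q], rule exI[where x=R])
    using assms(2-6) by simp
  then show False using assms(1) unfolding nosplitU_def by simp
qed

lemma wf_subset: "wf_edges inc F \<Longrightarrow> G \<subseteq> F \<Longrightarrow> wf_edges inc G"
  unfolding wf_edges_def by (auto intro: finite_subset)

lemma wf_finite: "wf_edges inc F \<Longrightarrow> finite F"
  unfolding wf_edges_def by auto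

lemma wf_card: "wf_edges inc F \<Longrightarrow> e \<in> F \<Longrightarrow> card (inc e) = 1 \<or> card (inc e) = 2"
  unfolding wf_edges_def by auto

lemma wf_inc_finite: "wf_edges inc F \<Longrightarrow> e \<in> F \<Longrightarrow> finite (inc e)"
proof -
  assume a: "wf_edges inc F" "e \<in> F"
  have "card (inc e) > 0" using wf_card[OF a] by auto
  then show ?thesis using card_ge_0_finite by blast
qed

lemma wf_inc_ne: "wf_edges inc F \<Longrightarrow> e \<in> F \<Longrightarrow> inc e \<noteq> {}"
  using wf_card by fastforce

lemma verts_Un: "verts inc (A \<union> B) = verts inc A \<union> verts inc B"
  unfolding verts_def by auto

lemma verts_mono: "A \<subseteq> B \<Longrightarrow> verts inc A \<subseteq> verts inc B"
  unfolding verts_def by auto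

lemma verts_empty[simp]: "verts inc {} = {}"
  unfolding verts_def by auto

lemma verts_insert: "verts inc (insert e A) = inc e \<union> verts inc A"
  unfolding verts_def by auto

lemma verts_iff: "v \<in> verts inc A \<longleftrightarrow> (\<exists>e\<in>A. v \<in> inc e)"
  unfolding verts_def by auto

lemma verts_finite: assumes "wf_edges inc F" shows "finite (verts inc F)"
  unfolding verts_def
proof (rule finite_UN_I)
  show "finite F" using wf_finite[OF assms] .
next
  fix e assume "e \<in> F"
  then show "finite (inc e)" using wf_inc_finite[OF assms] by blast
qed

lemma inc_sub_verts: "e \<in> A \<Longrightarrow> inc e \<subseteq> verts inc A"
  unfolding verts_def by auto

lemma cw_ge1: "cw inc e \<ge> 1" unfolding cw_def by auto

lemma deg_alt: "finite F \<Longrightarrow> deg inc F v = (\<Sum>e\<in>F. if v \<in> inc e then cw inc e else 0)"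
  unfolding deg_def cw_def by (simp add: sum.inter_filter)

lemma deg_sum:
  assumes "finite F" "finite N"
  shows "(\<Sum>v\<in>N. deg inc F v) = (\<Sum>e\<in>F. card (N \<inter> inc e) * cw inc e)"
proof -
  have "(\<Sum>v\<in>N. deg inc F v) = (\<Sum>v\<in>N. \<Sum>e\<in>F. if v \<in> inc e then cw inc e else 0)"
    using assms by (simp add: deg_alt)
  also have "\<dots> = (\<Sum>e\<in>F. \<Sum>v\<in>N. if v \<in> inc e then cw inc e else 0)"
    by (rule sum.swap)
  also have "\<dots> = (\<Sum>e\<in>F. card (N \<inter> inc e) * cw inc e)"
  proof (rule sum.cong[OF refl])
    fix e
    have "(\<Sum>v\<in>N. if v \<in> inc e then cw inc e else 0) = (\<Sum>v\<in>N \<inter> inc e. cw inc e)"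
      using assms(2) by (simp add: sum.inter_filter[symmetric] Int_def)
    also have "\<dots> = card (N \<inter> inc e) * cw inc e" by simp
    finally show "(\<Sum>v\<in>N. if v \<in> inc e then cw inc e else 0) = card (N \<inter> inc e) * cw inc e" .
  qed
  finally show ?thesis .
qed

lemma deg_ge_card: "finite F \<Longrightarrow> card {e\<in>F. v \<in> inc e} \<le> deg inc F v"
  unfolding deg_def
  using sum_mono[of "{e\<in>F. v \<in> inc e}" "\<lambda>_. 1::nat" "\<lambda>e. if is_loop inc e then 2 else 1"]
  by auto

lemma deg_remove:
  assumes "finite F" "e \<in> F"
  shows "deg inc F v = deg inc (F - {e}) v + (if v \<in> inc e then cw inc e else 0)"
  using assms by (simp add: deg_alt sum.remove add.commute)

lemma deg_pos: "finite F \<Longrightarrow> 0 < deg inc F v \<longleftrightarrow> v \<in> verts inc F"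
proof -
  assume f: "finite F"
  show ?thesis
  proof
    assume "0 < deg inc F v"
    then have "{e\<in>F. v \<in> inc e} \<noteq> {}" unfolding deg_def by (metis (no_types, lifting) less_irrefl sum.empty)
    then show "v \<in> verts inc F" by (auto simp: verts_iff)
  next
    assume "v \<in> verts inc F"
    then obtain e where "e \<in> F" "v \<in> inc e" by (auto simp: verts_iff)
    then have "card {e\<in>F. v \<in> inc e} > 0" using f by (auto simp: card_gt_0_iff)
    then show "0 < deg inc F v" using deg_ge_card[OF f, where inc=inc and v=v] by linarith
  qed
qed

lemma deg_zero: "finite F \<Longrightarrow> v \<notin> verts inc F \<Longrightarrow> deg inc F v = 0"
  using deg_pos[where F=F and inc=inc and v=v] by simp

lemma deg_singleton_set:
  assumes "finite F" "{e\<in>F. v \<in> inc e} = {e0}"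
  shows "deg inc F v = cw inc e0"
  using assms unfolding deg_def cw_def by simp

lemma deg_pair_set:
  assumes "finite F" "{e\<in>F. v \<in> inc e} = {e1, e2}" "e1 \<noteq> e2"
  shows "deg inc F v = cw inc e1 + cw inc e2"
  using assms unfolding deg_def cw_def by simp

lemma deg_one:
  assumes "wf_edges inc F" "deg inc F v = 1"
  shows "\<exists>e. {e\<in>F. v \<in> inc e} = {e} \<and> \<not> is_loop inc e"
proof -
  have f: "finite F" using assms wf_finite by blast
  have "v \<in> verts inc F" using deg_pos[OF f, where inc=inc and v=v] assms by simp
  then obtain e where e: "e \<in> F" "v \<in> inc e" by (auto simp: verts_iff)
  have c: "card {e\<in>F. v \<in> inc e} \<le> 1" using deg_ge_card[OF f, where inc=inc and v=v] assms by simp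
  have fin: "finite {e\<in>F. v \<in> inc e}" using f by simp
  have "{e\<in>F. v \<in> inc e} = {e}"
  proof -
    have eS: "e \<in> {e\<in>F. v \<in> inc e}" using e by simp
    then have "card {e\<in>F. v \<in> inc e} \<noteq> 0" using fin by auto
    then have "card {e\<in>F. v \<in> inc e} = 1" using c by linarith
    then obtain x where x: "{e\<in>F. v \<in> inc e} = {x}" using card_1_singletonE by blast
    then have "x = e" using eS by simp
    then show ?thesis using x by simp
  qed
  note S = this
  have "cw inc e = 1" using deg_singleton_set[OF f S] assms(2) by simp
  then have "\<not> is_loop inc e" unfolding cw_def by (cases "is_loop inc e") simp_all
  then show ?thesis using S by blast
qed

lemma w_inside:
  assumes "wf_edges inc F" "e \<in> F" "inc e \<subseteq> N"
  shows "card (N \<inter> inc e) * cw inc e = 2"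
proof -
  have "N \<inter> inc e = inc e" using assms(3) by blast
  then show ?thesis using wf_card[OF assms(1,2)] by (auto simp: cw_def is_loop_def)
qed

lemma w_outside:
  assumes "wf_edges inc F" "e \<in> F" "\<not> inc e \<subseteq> N"
  shows "card (N \<inter> inc e) * cw inc e \<le> 1"
proof -
  have fin: "finite (inc e)" using wf_inc_finite[OF assms(1,2)] .
  have lt: "card (N \<inter> inc e) < card (inc e)"
    using assms(3) fin by (intro psubset_card_mono) auto
  show ?thesis using wf_card[OF assms(1,2)] lt by (auto simp: cw_def is_loop_def)
qed

lemma w_le2:
  assumes "wf_edges inc F" "e \<in> F"
  shows "card (N \<inter> inc e) * cw inc e \<le> 2"
proof (cases "inc e \<subseteq> N")
  case True
  then show ?thesis using w_inside[OF assms True] by simp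
next
  case False
  then show ?thesis using w_outside[OF assms False] by simp
qed

lemma w_one:
  assumes "wf_edges inc F" "e \<in> F" "card (N \<inter> inc e) * cw inc e = 1"
  shows "\<exists>u n. inc e = {u, n} \<and> u \<noteq> n \<and> u \<notin> N \<and> n \<in> N"
proof -
  have fin: "finite (inc e)" using wf_inc_finite[OF assms(1,2)] .
  have nl: "\<not> is_loop inc e" and c1: "card (N \<inter> inc e) = 1"
    using assms(3) by (auto simp: cw_def split: if_splits)
  then have c2: "card (inc e) = 2" using wf_card[OF assms(1,2)] by (auto simp: is_loop_def)
  obtain u n where un: "inc e = {u, n}" "u \<noteq> n" using c2 by (auto simp: card_2_iff)
  obtain x where x: "N \<inter> inc e = {x}" using c1 card_1_singletonE by blast
  show ?thesis
  proof (cases "x = n")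
    case True
    then show ?thesis using un x by blast
  next
    case False
    then have "x = u" using x un by blast
    have uN: "u \<in> N" using x \<open>x = u\<close> un(1) by (metis Int_iff insertI1)
    have nN: "n \<notin> N" using x \<open>x = u\<close> un by (metis Int_iff insertCI singletonD)
    show ?thesis using uN nN un by (metis insert_commute)
  qed
qed

lemma w_zero:
  assumes "card (N \<inter> inc e) * cw inc e = 0" "finite (inc e)"
  shows "N \<inter> inc e = {}"
  using assms cw_ge1[of inc e] by auto

definition erel :: "('e \<Rightarrow> 'v set) \<Rightarrow> 'e set \<Rightarrow> ('v \<times> 'v) set" where
  "erel inc F = {(a, b). \<exists>e\<in>F. a \<in> inc e \<and> b \<in> inc e}"

lemma connected_gr_erel: "connected_gr inc W F \<longleftrightarrow> W \<noteq> {} \<and> (\<forall>u\<in>W. \<forall>w\<in>W. (u, w) \<in> (erel inc F)\<^sup>*)"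
  unfolding connected_gr_def erel_def by simp

lemma erel_sym: "(erel inc F)\<inverse> = erel inc F"
  unfolding erel_def by auto

lemma erel_rtrancl_sym: "(a, b) \<in> (erel inc F)\<^sup>* \<Longrightarrow> (b, a) \<in> (erel inc F)\<^sup>*"
  by (metis erel_sym rtrancl_converseI)

lemma reach_closed:
  assumes "(a, b) \<in> (erel inc F)\<^sup>*" "a \<in> verts inc Q" "Q \<union> R = F" "verts inc Q \<inter> verts inc R = {}"
  shows "b \<in> verts inc Q"
  using assms(1,2)
proof (induction rule: rtrancl_induct)
  case base
  then show ?case .
next
  case (step y z)
  then obtain e where e: "e \<in> F" "y \<in> inc e" "z \<in> inc e" unfolding erel_def by auto
  show ?case
  proof (cases "e \<in> Q")
    case True
    then show ?thesis using e by (auto simp: verts_iff)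
  next
    case False
    then have "e \<in> R" using e assms(3) by auto
    then have "y \<in> verts inc R" using e by (auto simp: verts_iff)
    then show ?thesis using step assms(4) by auto
  qed
qed

lemma conn_nosplit:
  assumes "wf_edges inc F" "connected_gr inc W F" "\<forall>e\<in>F. inc e \<subseteq> W"
  shows "nosplitU inc {} F"
  unfolding nosplitU_def
proof
  assume "\<exists>Q R. Q \<union> R = F \<and> Q \<inter> R = {} \<and> Q \<noteq> {} \<and> R \<noteq> {} \<and> verts inc Q \<inter> verts inc R \<subseteq> {}"
  then obtain Q R where s: "Q \<union> R = F" "Q \<noteq> {}" "R \<noteq> {}" "verts inc Q \<inter> verts inc R = {}" by blast
  obtain e1 where e1: "e1 \<in> Q" using s by blast
  obtain e2 where e2: "e2 \<in> R" using s by blast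
  have e1F: "e1 \<in> F" using e1 s(1) by blast
  have e2F: "e2 \<in> F" using e2 s(1) by blast
  obtain a where a: "a \<in> inc e1" using wf_inc_ne[OF assms(1) e1F] by blast
  obtain b where b: "b \<in> inc e2" using wf_inc_ne[OF assms(1) e2F] by blast
  have aW: "a \<in> W" using a assms(3) e1F by blast
  have bW: "b \<in> W" using b assms(3) e2F by blast
  have "(a, b) \<in> (erel inc F)\<^sup>*" using assms(2) aW bW unfolding connected_gr_erel by blast
  moreover have "a \<in> verts inc Q" using a e1 by (auto simp: verts_iff)
  ultimately have "b \<in> verts inc Q" using reach_closed[OF _ _ s(1) s(4)] by blast
  moreover have "b \<in> verts inc R" using b e2 by (auto simp: verts_iff)
  ultimately show False using s by auto
qed

lemma nosplit_conn:
  assumes "wf_edges inc F" "F \<noteq> {}" "nosplitU inc {} F"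
  shows "connected_gr inc (verts inc F) F"
proof -
  obtain e0 where e0: "e0 \<in> F" using assms by blast
  obtain a where a: "a \<in> inc e0" using wf_inc_ne[OF assms(1) e0] by blast
  define Q where "Q = {e\<in>F. \<exists>x\<in>inc e. (a, x) \<in> (erel inc F)\<^sup>*}"
  define R where "R = F - Q"
  have reach: "(a, v) \<in> (erel inc F)\<^sup>*" if eQ: "e \<in> Q" and vin: "v \<in> inc e" for e v
  proof -
    obtain x where x: "x \<in> inc e" "(a, x) \<in> (erel inc F)\<^sup>*" using eQ unfolding Q_def by blast
    have "(x, v) \<in> erel inc F" using x eQ vin unfolding erel_def Q_def by auto
    then show ?thesis using x by (meson rtrancl.rtrancl_into_rtrancl)
  qed
  have disj: "verts inc Q \<inter> verts inc R = {}"
  proof (rule ccontr)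
    assume "verts inc Q \<inter> verts inc R \<noteq> {}"
    then obtain v e1 e2 where "e1 \<in> Q" "v \<in> inc e1" "e2 \<in> R" "v \<in> inc e2" by (auto simp: verts_iff)
    then have "(a, v) \<in> (erel inc F)\<^sup>*" using reach by blast
    then have "e2 \<in> Q" using \<open>e2 \<in> R\<close> \<open>v \<in> inc e2\<close> unfolding Q_def R_def by auto
    then show False using \<open>e2 \<in> R\<close> unfolding R_def by auto
  qed
  have "e0 \<in> Q" using e0 a unfolding Q_def by auto
  then have "R = {}"
  proof -
    assume e0Q: "e0 \<in> Q"
    show "R = {}"
    proof (rule ccontr)
      assume Rne: "R \<noteq> {}"
      have a1: "Q \<union> R = F" "Q \<inter> R = {}" "Q \<noteq> {}" using e0Q unfolding R_def Q_def by auto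
      have a2: "verts inc Q \<inter> verts inc R \<subseteq> {}" using disj by simp
      show False by (rule nosplitU_E[OF assms(3) a1 Rne a2])
    qed
  qed
  then have QF: "Q = F" unfolding R_def Q_def by auto
  have all: "(a, v) \<in> (erel inc F)\<^sup>*" if "v \<in> verts inc F" for v
    using that QF reach by (auto simp: verts_iff)
  show ?thesis unfolding connected_gr_erel
  proof (intro conjI ballI)
    show "verts inc F \<noteq> {}" using e0 a inc_sub_verts[OF e0, of inc] by blast
  next
    fix u w assume "u \<in> verts inc F" "w \<in> verts inc F"
    then show "(u, w) \<in> (erel inc F)\<^sup>*" using all erel_rtrancl_sym
      by (meson rtrancl_trans)
  qed
qed

lemma conn_single: "connected_gr inc {u} F"
  unfolding connected_gr_def by auto

lemma conn_vertex_in_edge: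
  assumes "connected_gr inc W F" "v \<in> W" "w \<in> W" "v \<noteq> w"
  shows "v \<in> verts inc F"
proof -
  have "(v, w) \<in> (erel inc F)\<^sup>*" using assms unfolding connected_gr_erel by auto
  then show ?thesis
  proof (cases rule: converse_rtranclE)
    case base
    then show ?thesis using assms(4) by blast
  next
    case (step z)
    then obtain e where "e \<in> F" "v \<in> inc e" unfolding erel_def by blast
    then show ?thesis unfolding verts_iff by blast
  qed
qed

lemma path_list_verts:
  assumes "length vs = length es + 1" "es \<noteq> []" "\<forall>i<length es. inc (es ! i) = {vs ! i, vs ! Suc i}"
  shows "verts inc (set es) = set vs"
proof
  show "verts inc (set es) \<subseteq> set vs"
  proof
    fix v assume "v \<in> verts inc (set es)"
    then obtain e where "e \<in> set es" "v \<in> inc e" by (auto simp: verts_iff)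
    then obtain i where i: "i < length es" "e = es ! i" by (auto simp: in_set_conv_nth)
    then have "v = vs ! i \<or> v = vs ! Suc i" using assms(3) \<open>v \<in> inc e\<close> by auto
    then show "v \<in> set vs" using i assms(1) by auto
  qed
next
  show "set vs \<subseteq> verts inc (set es)"
  proof
    fix v assume "v \<in> set vs"
    then obtain j where j: "j < length vs" "v = vs ! j" by (auto simp: in_set_conv_nth)
    show "v \<in> verts inc (set es)"
    proof (cases "j < length es")
      case True
      then show ?thesis using assms(3) j by (auto simp: verts_iff intro!: bexI[of _ "es ! j"])
    next
      case False
      have jl: "j = length es" using j False assms(1) by simp
      have "length es > 0" using assms(2) by simp
      then have jj: "j = Suc (j - 1)" "j - 1 < length es" using jl by auto
      have ie: "inc (es ! (j - 1)) = {vs ! (j - 1), vs ! Suc (j - 1)}" using assms(3) jj(2) by blast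
      have "v = vs ! Suc (j - 1)" using j(2) jj(1) by simp
      then have "v \<in> inc (es ! (j - 1))" using ie by simp
      then show ?thesis using jj by (auto simp: verts_iff)
    qed
  qed
qed

lemma is_pathE:
  assumes "is_path inc W F x y"
  obtains vs es where "x \<noteq> y" "es \<noteq> []" "length vs = length es + 1" "distinct vs" "distinct es"
    "hd vs = x" "last vs = y" "\<forall>i<length es. inc (es ! i) = {vs ! i, vs ! Suc i}"
    "W = set vs" "F = set es"
  using assms unfolding is_path_def by blast

lemma path_verts: assumes "is_path inc W F x y" shows "W = verts inc F"
proof -
  obtain vs es where p: "x \<noteq> y" "es \<noteq> []" "length vs = length es + 1" "distinct vs" "distinct es"
    "hd vs = x" "last vs = y" "\<forall>i<length es. inc (es ! i) = {vs ! i, vs ! Suc i}"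
    "W = set vs" "F = set es" by (rule is_pathE[OF assms])
  show ?thesis using path_list_verts[OF p(3,2,8)] p(9,10) by simp
qed

lemma path_card: assumes "is_path inc W F x y" shows "card W = card F + 1"
proof -
  obtain vs es where p: "x \<noteq> y" "es \<noteq> []" "length vs = length es + 1" "distinct vs" "distinct es"
    "hd vs = x" "last vs = y" "\<forall>i<length es. inc (es ! i) = {vs ! i, vs ! Suc i}"
    "W = set vs" "F = set es" by (rule is_pathE[OF assms])
  show ?thesis using p(3,4,5,9,10) by (simp add: distinct_card)
qed

lemma path_finite: assumes "is_path inc W F x y" shows "finite W \<and> finite F"
proof -
  obtain vs es where p: "x \<noteq> y" "es \<noteq> []" "length vs = length es + 1" "distinct vs" "distinct es"
    "hd vs = x" "last vs = y" "\<forall>i<length es. inc (es ! i) = {vs ! i, vs ! Suc i}"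
    "W = set vs" "F = set es" by (rule is_pathE[OF assms])
  show ?thesis using p(9,10) by simp
qed

lemma path_ends: assumes "is_path inc W F x y" shows "x \<in> W \<and> y \<in> W \<and> x \<noteq> y"
proof -
  obtain vs es where p: "x \<noteq> y" "es \<noteq> []" "length vs = length es + 1" "distinct vs" "distinct es"
    "hd vs = x" "last vs = y" "\<forall>i<length es. inc (es ! i) = {vs ! i, vs ! Suc i}"
    "W = set vs" "F = set es" by (rule is_pathE[OF assms])
  have "vs \<noteq> []" using p(3) by auto
  then show ?thesis using p hd_in_set[of vs] last_in_set[of vs] by simp
qed

lemma path_sub_both:
  assumes "is_path inc W F x y" "B \<subseteq> F" "B \<noteq> F"
  shows "card B \<le> card (verts inc B - {x, y})"
proof -
  obtain vs es where p: "x \<noteq> y" "es \<noteq> []" "length vs = length es + 1" "distinct vs" "distinct es"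
    "hd vs = x" "last vs = y" "\<forall>i<length es. inc (es ! i) = {vs ! i, vs ! Suc i}"
    "W = set vs" "F = set es" by (rule is_pathE[OF assms(1)])
  define m where "m = length es"
  define I where "I = {i. i < m \<and> es ! i \<in> B}"
  have BI: "B = (\<lambda>i. es ! i) ` I"
  proof
    show "B \<subseteq> (\<lambda>i. es ! i) ` I"
    proof
      fix e assume "e \<in> B"
      then have "e \<in> set es" using assms(2) p by auto
      then obtain i where "i < m" "e = es ! i" unfolding m_def by (auto simp: in_set_conv_nth)
      then show "e \<in> (\<lambda>i. es ! i) ` I" using \<open>e \<in> B\<close> unfolding I_def by auto
    qed
  qed (auto simp: I_def)
  have injes: "inj_on (\<lambda>i. es ! i) I"
    using p(5) unfolding I_def m_def inj_on_def by (auto simp: nth_eq_iff_index_eq)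
  have cB: "card B = card I" using card_image[OF injes] BI by simp
  obtain j where j: "j < m" "es ! j \<notin> B"
  proof -
    have "\<not> set es \<subseteq> B" using assms(2,3) p by auto
    then obtain e where "e \<in> set es" "e \<notin> B" by auto
    then show ?thesis using that unfolding m_def by (auto simp: in_set_conv_nth)
  qed
  define psi where "psi i = (if i < j then Suc i else i)" for i
  define g where "g i = vs ! psi i" for i
  have lenvs: "length vs = Suc m" using p unfolding m_def by simp
  have vsne: "vs \<noteq> []" using lenvs by auto
  have hdv: "x = vs ! 0" using hd_conv_nth[OF vsne] p(6) by simp
  have vsne': "vs \<noteq> []" using lenvs by auto
  have lastv: "y = vs ! m" using last_conv_nth[OF vsne'] p(7) lenvs by simp
  have psi_range: "0 < psi i \<and> psi i < m" if "i \<in> I" for i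
  proof -
    have "i < m" "i \<noteq> j" using that j unfolding I_def by auto
    then show ?thesis unfolding psi_def using j by auto
  qed
  have g_in: "g i \<in> verts inc B - {x, y}" if "i \<in> I" for i
  proof -
    have i: "i < m" "es ! i \<in> B" using that unfolding I_def by auto
    have "g i \<in> inc (es ! i)" using p(8) i unfolding g_def psi_def m_def by auto
    then have "g i \<in> verts inc B" using i by (auto simp: verts_iff)
    moreover have "g i \<noteq> x" using psi_range[OF that] p(4) lenvs hdv unfolding g_def
      by (simp add: nth_eq_iff_index_eq)
    moreover have "g i \<noteq> y" using psi_range[OF that] p(4) lenvs lastv unfolding g_def
      by (simp add: nth_eq_iff_index_eq)
    ultimately show ?thesis by auto
  qed
  have g_inj: "inj_on g I"
  proof
    fix i i' assume ii: "i \<in> I" "i' \<in> I" "g i = g i'"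
    have "psi i < length vs" "psi i' < length vs" using psi_range[OF ii(1)] psi_range[OF ii(2)] lenvs by auto
    then have "psi i = psi i'" using ii p(4) unfolding g_def by (simp add: nth_eq_iff_index_eq)
    moreover have "i \<noteq> j" "i' \<noteq> j" using ii j unfolding I_def by auto
    ultimately show "i = i'" unfolding psi_def by (auto split: if_splits)
  qed
  have fin: "finite (verts inc B - {x, y})"
  proof -
    have "verts inc B \<subseteq> verts inc F" by (rule verts_mono[OF assms(2)])
    also have "\<dots> = W" using path_verts[OF assms(1)] by simp
    finally have sW: "verts inc B \<subseteq> W" .
    have "finite W" using p(9) by simp
    then show ?thesis using finite_subset[OF sW] by simp
  qed
  have "card I = card (g ` I)" using card_image[OF g_inj] by simp
  also have "\<dots> \<le> card (verts inc B - {x, y})" using g_in fin by (intro card_mono) auto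
  finally show ?thesis using cB by simp
qed

lemma path_sub_end:
  assumes "is_path inc W F x y" "B \<subseteq> F"
  shows "card B \<le> card (verts inc B - {y})"
proof -
  obtain vs es where p: "x \<noteq> y" "es \<noteq> []" "length vs = length es + 1" "distinct vs" "distinct es"
    "hd vs = x" "last vs = y" "\<forall>i<length es. inc (es ! i) = {vs ! i, vs ! Suc i}"
    "W = set vs" "F = set es" by (rule is_pathE[OF assms(1)])
  define m where "m = length es"
  define I where "I = {i. i < m \<and> es ! i \<in> B}"
  have BI: "B = (\<lambda>i. es ! i) ` I"
  proof
    show "B \<subseteq> (\<lambda>i. es ! i) ` I"
    proof
      fix e assume "e \<in> B"
      then have "e \<in> set es" using assms(2) p by auto
      then obtain i where "i < m" "e = es ! i" unfolding m_def by (auto simp: in_set_conv_nth)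
      then show "e \<in> (\<lambda>i. es ! i) ` I" using \<open>e \<in> B\<close> unfolding I_def by auto
    qed
  qed (auto simp: I_def)
  have injes: "inj_on (\<lambda>i. es ! i) I"
    using p(5) unfolding I_def m_def inj_on_def by (auto simp: nth_eq_iff_index_eq)
  have cB: "card B = card I" using card_image[OF injes] BI by simp
  define g where "g i = vs ! i" for i
  have lenvs: "length vs = Suc m" using p unfolding m_def by simp
  have vsne': "vs \<noteq> []" using lenvs by auto
  have lastv: "y = vs ! m" using last_conv_nth[OF vsne'] p(7) lenvs by simp
  have g_in: "g i \<in> verts inc B - {y}" if "i \<in> I" for i
  proof -
    have i: "i < m" "es ! i \<in> B" using that unfolding I_def by auto
    have "g i \<in> inc (es ! i)" using p(8) i unfolding g_def m_def by auto
    then have "g i \<in> verts inc B" using i by (auto simp: verts_iff)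
    moreover have "g i \<noteq> y" using i p(4) lenvs lastv unfolding g_def
      by (simp add: nth_eq_iff_index_eq)
    ultimately show ?thesis by auto
  qed
  have g_inj: "inj_on g I"
  proof
    fix i i' assume ii: "i \<in> I" "i' \<in> I" "g i = g i'"
    have "i < length vs" "i' < length vs" using ii lenvs unfolding I_def by auto
    then show "i = i'" using ii p(4) unfolding g_def by (simp add: nth_eq_iff_index_eq)
  qed
  have fin: "finite (verts inc B - {y})"
  proof -
    have "verts inc B \<subseteq> verts inc F" by (rule verts_mono[OF assms(2)])
    also have "\<dots> = W" using path_verts[OF assms(1)] by simp
    finally have sW: "verts inc B \<subseteq> W" .
    have "finite W" using p(9) by simp
    then show ?thesis using finite_subset[OF sW] by simp
  qed
  have "card I = card (g ` I)" using card_image[OF g_inj] by simp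
  also have "\<dots> \<le> card (verts inc B - {y})" using g_in fin by (intro card_mono) auto
  finally show ?thesis using cB by simp
qed

lemma path_single:
  assumes "inc e = {a, b}" "a \<noteq> b"
  shows "is_path inc {a, b} {e} a b"
  unfolding is_path_def using assms
  by (intro conjI exI[of _ "[a, b]"] exI[of _ "[e]"]) (auto simp: nth_Cons split: nat.splits)

lemma path_snoc:
  assumes "is_path inc W F x c" "a \<notin> W" "e \<notin> F" "inc e = {c, a}"
  shows "is_path inc (insert a W) (insert e F) x a"
proof -
  obtain vs es where p: "x \<noteq> c" "es \<noteq> []" "length vs = length es + 1" "distinct vs" "distinct es"
    "hd vs = x" "last vs = c" "\<forall>i<length es. inc (es ! i) = {vs ! i, vs ! Suc i}"
    "W = set vs" "F = set es" by (rule is_pathE[OF assms(1)])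
  have vsne: "vs \<noteq> []" using p by auto
  have xa: "x \<noteq> a" using p(6,9) assms(2) hd_in_set[OF vsne] by auto
  have lastc: "vs ! length es = c" using last_conv_nth[OF vsne] p(3,7) by simp
  have inc_new: "\<forall>i<length (es @ [e]). inc ((es @ [e]) ! i) = {(vs @ [a]) ! i, (vs @ [a]) ! Suc i}"
  proof (intro allI impI)
    fix i assume "i < length (es @ [e])"
    then have "i < length es \<or> i = length es" by auto
    then show "inc ((es @ [e]) ! i) = {(vs @ [a]) ! i, (vs @ [a]) ! Suc i}"
    proof
      assume i: "i < length es"
      then show ?thesis using p by (simp add: nth_append)
    next
      assume i: "i = length es"
      then show ?thesis using p assms(4) lastc by (simp add: nth_append)
    qed
  qed
  show ?thesis unfolding is_path_def
    apply (intro conjI exI[of _ "vs @ [a]"] exI[of _ "es @ [e]"])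
    using p assms xa vsne inc_new by auto
qed

lemma wsum_eq:
  assumes wf: "wf_edges inc R"
  shows "(\<Sum>e\<in>R. card (N \<inter> inc e) * cw inc e) =
         2 * card {e\<in>R. inc e \<subseteq> N} + (\<Sum>e\<in>{e\<in>R. \<not> inc e \<subseteq> N}. card (N \<inter> inc e) * cw inc e)"
proof -
  have fR: "finite R" using wf wf_finite by blast
  let ?w = "\<lambda>e. card (N \<inter> inc e) * cw inc e"
  let ?A = "{e\<in>R. inc e \<subseteq> N}" and ?B = "{e\<in>R. \<not> inc e \<subseteq> N}"
  have "R = ?A \<union> ?B" by auto
  then have "(\<Sum>e\<in>R. ?w e) = (\<Sum>e\<in>?A. ?w e) + (\<Sum>e\<in>?B. ?w e)"
    using fR by (metis (no_types, lifting) sum.union_disjoint finite_Un disjoint_iff mem_Collect_eq)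
  moreover have "(\<Sum>e\<in>?A. ?w e) = (\<Sum>e\<in>?A. 2)"
    using w_inside[OF wf] by (intro sum.cong) auto
  ultimately show ?thesis by simp
qed

lemma sum_le_card:
  assumes "finite T" "\<forall>e\<in>T. (f e :: nat) \<le> 1"
  shows "sum f T \<le> card T"
proof -
  have "sum f T \<le> sum (\<lambda>_. 1) T" using assms by (intro sum_mono) auto
  then show ?thesis by simp
qed

lemma sub_lemma:
  assumes wf: "wf_edges inc F" and fW: "finite W" and sub: "\<forall>e\<in>F. inc e \<subseteq> W"
    and ns: "nosplitU inc {} F" and dg: "\<forall>v\<in>W. deg inc F v \<ge> 2"
    and D: "D \<subseteq> F" "D \<noteq> {}" "D \<noteq> F"
    and ex: "int (card F) - int (card W) \<le> int (card D) - int (card (verts inc D))"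
  shows False
proof -
  define N where "N = W - verts inc D"
  define R where "R = F - D"
  let ?w = "\<lambda>e. card (N \<inter> inc e) * cw inc e"
  have fF: "finite F" using wf wf_finite by blast
  have fN: "finite N" using fW N_def by simp
  have vDW: "verts inc D \<subseteq> W"
  proof
    fix v assume "v \<in> verts inc D"
    then obtain e where "e \<in> D" "v \<in> inc e" by (auto simp: verts_iff)
    then show "v \<in> W" using sub D(1) by blast
  qed
  have fvD: "finite (verts inc D)" using vDW fW finite_subset by blast
  have cW: "card W = card (verts inc D) + card N" unfolding N_def using vDW fW fvD
    by (simp add: card_Diff_subset card_mono)
  have fD: "finite D" using D(1) fF finite_subset by blast
  have cF: "card F = card D + card R" unfolding R_def using D(1) fF fD
    by (simp add: card_Diff_subset card_mono)
  have RN: "card R \<le> card N" using ex cW cF by linarith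
  have s1: "2 * card N \<le> (\<Sum>v\<in>N. deg inc F v)"
  proof -
    have "(\<Sum>v\<in>N. 2) \<le> (\<Sum>v\<in>N. deg inc F v)" using dg unfolding N_def by (intro sum_mono) auto
    then show ?thesis by simp
  qed
  have s2: "(\<Sum>v\<in>N. deg inc F v) = (\<Sum>e\<in>F. ?w e)" using deg_sum fF fN by blast
  have wD: "?w e = 0" if "e \<in> D" for e
  proof -
    have "inc e \<subseteq> verts inc D" using that by (rule inc_sub_verts)
    then have "N \<inter> inc e = {}" unfolding N_def by blast
    then show ?thesis by simp
  qed
  have s3: "(\<Sum>e\<in>F. ?w e) = (\<Sum>e\<in>R. ?w e)"
    using fF wD unfolding R_def by (intro sum.mono_neutral_right) auto
  have wfR: "wf_edges inc R" using wf_subset[OF wf] unfolding R_def by blast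
  define T where "T = {e\<in>R. \<not> inc e \<subseteq> N}"
  define A where "A = {e\<in>R. inc e \<subseteq> N}"
  have s4: "(\<Sum>e\<in>R. ?w e) = 2 * card A + (\<Sum>e\<in>T. ?w e)"
    using wsum_eq[OF wfR] unfolding A_def T_def by blast
  have fR: "finite R" using wfR wf_finite by blast
  have s5: "(\<Sum>e\<in>T. ?w e) \<le> card T"
    using fR w_outside[OF wfR] unfolding T_def by (intro sum_le_card) auto
  have cR: "card R = card A + card T"
  proof -
    have "R = A \<union> T" "A \<inter> T = {}" unfolding A_def T_def by auto
    then show ?thesis using fR by (metis card_Un_disjoint finite_Un)
  qed
  have "card T = 0" using s1 s2 s3 s4 s5 cR RN by linarith
  then have T0: "T = {}" using fR unfolding T_def by simp
  have "\<forall>e\<in>R. inc e \<subseteq> N" using T0 unfolding T_def by auto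
  then have "verts inc R \<subseteq> N" unfolding verts_def by blast
  then have disj: "verts inc D \<inter> verts inc R = {}" unfolding N_def by blast
  have a1: "D \<union> R = F" "D \<inter> R = {}" "R \<noteq> {}" using D unfolding R_def by auto
  have a2: "verts inc D \<inter> verts inc R \<subseteq> {}" using disj by simp
  show False by (rule nosplitU_E[OF ns a1(1,2) D(2) a1(3) a2])
qed

lemma deg_all_two_card:
  assumes wf: "wf_edges inc F" and fW: "finite W" and sub: "\<forall>e\<in>F. inc e \<subseteq> W"
    and dg: "\<forall>v\<in>W. deg inc F v = 2"
  shows "card F = card W"
proof -
  have fF: "finite F" using wf wf_finite by blast
  have "(\<Sum>v\<in>W. deg inc F v) = (\<Sum>v\<in>W. 2)" using dg by simp
  then have "(\<Sum>v\<in>W. deg inc F v) = 2 * card W" by simp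
  moreover have "(\<Sum>v\<in>W. deg inc F v) = 2 * card {e\<in>F. inc e \<subseteq> W} + (\<Sum>e\<in>{e\<in>F. \<not> inc e \<subseteq> W}. card (W \<inter> inc e) * cw inc e)"
    using deg_sum[OF fF fW] wsum_eq[OF wf] by simp
  moreover have "{e\<in>F. inc e \<subseteq> W} = F" "{e\<in>F. \<not> inc e \<subseteq> W} = {}" using sub by auto
  ultimately show ?thesis by simp
qed

lemma cycle_facts:
  assumes wf: "wf_edges inc F" and c: "is_cycle inc W F"
  shows "W = verts inc F" "card F = card W" "nosplitU inc {} F" "finite W"
proof -
  have fg: "finite W" "\<forall>e\<in>F. inc e \<subseteq> W" using c unfolding is_cycle_def finite_gr_def by auto
  have dg: "\<forall>v\<in>W. deg inc F v = 2" using c unfolding is_cycle_def by auto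
  have fF: "finite F" using wf wf_finite by blast
  show "W = verts inc F"
  proof
    show "W \<subseteq> verts inc F" using dg deg_pos[OF fF] by (metis subsetI zero_less_numeral)
    show "verts inc F \<subseteq> W"
    proof
      fix v assume "v \<in> verts inc F"
      then obtain e where "e \<in> F" "v \<in> inc e" by (auto simp: verts_iff)
      then show "v \<in> W" using fg by blast
    qed
  qed
  show "card F = card W" using deg_all_two_card[OF wf fg dg] .
  show "nosplitU inc {} F" using conn_nosplit[OF wf _ fg(2)] c unfolding is_cycle_def by blast
  show "finite W" using fg by simp
qed

lemma bicycle_facts:
  assumes wf: "wf_edges inc F" and b: "is_bicycle inc W F"
  shows "W = verts inc F" "\<forall>v\<in>W. deg inc F v \<ge> 2" "nosplitU inc {} F" "finite W"
    "int (card F) - int (card W) = 1"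
proof -
  have fg: "finite W" "\<forall>e\<in>F. inc e \<subseteq> W" using b unfolding is_bicycle_def finite_gr_def by auto
  have cn: "connected_gr inc W F" using b unfolding is_bicycle_def by auto
  have cd: "int (card F) - int (card W) = 1" using b unfolding is_bicycle_def by auto
  have nl: "\<forall>v\<in>W. \<not> is_leaf inc F v" using b unfolding is_bicycle_def by auto
  have fF: "finite F" using wf wf_finite by blast
  have inV: "v \<in> verts inc F" if v: "v \<in> W" for v
  proof (cases "\<exists>w\<in>W. w \<noteq> v")
    case True
    then obtain w where w: "w \<in> W" "w \<noteq> v" by blast
    have vw: "v \<noteq> w" using w(2) by (rule not_sym)
    show ?thesis by (rule conn_vertex_in_edge[OF cn v w(1) vw])
  next
    case False
    then have Wv: "W = {v}" using v by blast
    then have "card F = 2" using cd by simp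
    then have "F \<noteq> {}" by (metis card.empty zero_neq_numeral)
    then obtain e where e: "e \<in> F" by blast
    have "inc e \<subseteq> {v}" using fg(2) e Wv by blast
    moreover have "inc e \<noteq> {}" using wf_inc_ne[OF wf e] .
    ultimately have "v \<in> inc e" by blast
    then show ?thesis using e unfolding verts_iff by blast
  qed
  show "W = verts inc F"
  proof
    show "W \<subseteq> verts inc F" using inV by blast
    show "verts inc F \<subseteq> W"
    proof
      fix v assume "v \<in> verts inc F"
      then obtain e where "e \<in> F" "v \<in> inc e" by (auto simp: verts_iff)
      then show "v \<in> W" using fg by blast
    qed
  qed
  show "\<forall>v\<in>W. deg inc F v \<ge> 2"
  proof
    fix v assume v: "v \<in> W"
    let ?S = "{e\<in>F. v \<in> inc e}"
    have fS: "finite ?S" using fF by simp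
    have Sne: "?S \<noteq> {}" using inV[OF v] by (auto simp: verts_iff)
    show "deg inc F v \<ge> 2"
    proof (cases "card ?S \<ge> 2")
      case True
      then show ?thesis using deg_ge_card[OF fF, where inc=inc and v=v] by linarith
    next
      case False
      have "card ?S > 0" using Sne fS card_gt_0_iff by blast
      then have "card ?S = 1" using False by linarith
      then obtain e where e: "?S = {e}" using card_1_singletonE by blast
      then have "is_loop inc e" using nl v unfolding is_leaf_def by blast
      then show ?thesis using deg_singleton_set[OF fF e] by (simp add: cw_def)
    qed
  qed
  show "nosplitU inc {} F" using conn_nosplit[OF wf cn fg(2)] .
  show "finite W" using fg by simp
  show "int (card F) - int (card W) = 1" using cd .
qed

lemma pendant:
  assumes wf: "wf_edges inc F" and d: "deg inc F a = 1"
  shows "\<exists>e c. e \<in> F \<and> inc e = {a, c} \<and> a \<noteq> c \<and> {e\<in>F. a \<in> inc e} = {e} \<and> cw inc e = 1"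
proof -
  obtain e where e: "{e\<in>F. a \<in> inc e} = {e}" "\<not> is_loop inc e" using deg_one[OF wf d] by blast
  have eF: "e \<in> F" and ae: "a \<in> inc e" using e(1) by auto
  have "card (inc e) = 2" using wf_card[OF wf eF] e(2) unfolding is_loop_def by auto
  then obtain x y where xy: "inc e = {x, y}" "x \<noteq> y" by (auto simp: card_2_iff)
  obtain c where c: "inc e = {a, c}" "a \<noteq> c"
  proof (cases "a = x")
    case True
    then show ?thesis using that xy by blast
  next
    case False
    then have "a = y" using ae xy by blast
    then show ?thesis using that[of x] xy by (simp add: insert_commute)
  qed
  have "cw inc e = 1" using e(2) unfolding cw_def by simp
  then show ?thesis using eF c e(1) by blast
qed

lemma pendant_not_in:
  assumes "{e\<in>F. a \<in> inc e} = {e}"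
  shows "a \<notin> verts inc (F - {e})"
  using assms by (auto simp: verts_iff)

lemma nosplit_remove:
  assumes ns: "nosplitU inc {} F" and e: "e \<in> F" "inc e = {a, c}"
    and a: "a \<notin> verts inc (F - {e})" and c: "c \<in> verts inc (F - {e})"
  shows "nosplitU inc {} (F - {e})"
  unfolding nosplitU_def
proof
  assume "\<exists>Q R. Q \<union> R = F - {e} \<and> Q \<inter> R = {} \<and> Q \<noteq> {} \<and> R \<noteq> {} \<and> verts inc Q \<inter> verts inc R \<subseteq> {}"
  then obtain Q R where s: "Q \<union> R = F - {e}" "Q \<inter> R = {}" "Q \<noteq> {}" "R \<noteq> {}"
    "verts inc Q \<inter> verts inc R = {}" by blast
  have vQ: "verts inc Q \<subseteq> verts inc (F - {e})" "verts inc R \<subseteq> verts inc (F - {e})"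
    using s(1) verts_Un[of inc Q R] by auto
  have "c \<in> verts inc Q \<or> c \<in> verts inc R" using c s(1) verts_Un[of inc Q R] by auto
  then show False
  proof
    assume cQ: "c \<in> verts inc Q"
    have a1: "insert e Q \<union> R = F" "insert e Q \<inter> R = {}" "insert e Q \<noteq> {}"
      using s e by auto
    have a2: "verts inc (insert e Q) \<inter> verts inc R \<subseteq> {}"
      using s(5) cQ a vQ e(2) by (auto simp: verts_insert)
    show False by (rule nosplitU_E[OF ns a1 s(4) a2])
  next
    assume cR: "c \<in> verts inc R"
    have a1: "Q \<union> insert e R = F" "Q \<inter> insert e R = {}" "insert e R \<noteq> {}"
      using s e by auto
    have a2: "verts inc Q \<inter> verts inc (insert e R) \<subseteq> {}"
      using s(5) cR a vQ e(2) by (auto simp: verts_insert)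
    show False by (rule nosplitU_E[OF ns a1(1,2) s(3) a1(3) a2])
  qed
qed

lemma deg_remove_other:
  assumes "finite F" "e \<in> F" "v \<notin> inc e"
  shows "deg inc (F - {e}) v = deg inc F v"
  using deg_remove[OF assms(1,2), where inc=inc and v=v] assms(3) by simp

lemma deg_remove_in:
  assumes "finite F" "e \<in> F" "v \<in> inc e" "cw inc e = 1"
  shows "deg inc (F - {e}) v + 1 = deg inc F v"
  using deg_remove[OF assms(1,2), where inc=inc and v=v] assms(3,4) by simp

lemma path_ear:
  "card F = n \<Longrightarrow> wf_edges inc F \<Longrightarrow> a \<noteq> b \<Longrightarrow> deg inc F a = 1 \<Longrightarrow> deg inc F b = 1 \<Longrightarrow>
   (\<forall>v\<in>verts inc F - {a, b}. deg inc F v = 2) \<Longrightarrow> nosplitU inc {} F \<Longrightarrow>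
   is_path inc (verts inc F) F b a"
proof (induction n arbitrary: F a rule: less_induct)
  case (less n F a)
  have fF: "finite F" using less.prems(2) wf_finite by blast
  obtain e c where ec: "e \<in> F" "inc e = {a, c}" "a \<noteq> c" "{e\<in>F. a \<in> inc e} = {e}" "cw inc e = 1"
    using pendant[OF less.prems(2,4)] by blast
  obtain eb cb where ebc: "eb \<in> F" "inc eb = {b, cb}" "b \<noteq> cb" "{e\<in>F. b \<in> inc e} = {eb}"
    using pendant[OF less.prems(2,5)] by blast
  have anot: "a \<notin> verts inc (F - {e})" using pendant_not_in[OF ec(4)] .
  show ?case
  proof (cases "c = b")
    case True
    have "e \<in> {e\<in>F. b \<in> inc e}" using ec(1,2) True by simp
    then have "eb = e" using ebc(4) by simp
    then have bnot: "b \<notin> verts inc (F - {e})" using pendant_not_in[OF ebc(4)] by simp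
    have Fe: "F = {e}"
    proof (rule ccontr)
      assume "F \<noteq> {e}"
      then have Rne: "F - {e} \<noteq> {}" using ec(1) by auto
      have a1: "{e} \<union> (F - {e}) = F" "{e} \<inter> (F - {e}) = {}" "{e} \<noteq> {}" using ec(1) by auto
      have a2: "verts inc {e} \<inter> verts inc (F - {e}) \<subseteq> {}"
        using anot bnot ec(2) True by (auto simp: verts_insert)
      show False by (rule nosplitU_E[OF less.prems(7) a1 Rne a2])
    qed
    have "is_path inc {b, a} {e} b a" using path_single[of inc e b a] ec(2,3) True
      by (simp add: insert_commute)
    moreover have "verts inc F = {b, a}" using Fe ec(2) True by (auto simp: verts_insert)
    ultimately show ?thesis using Fe by simp
  next
    case False
    define F' where "F' = F - {e}"
    have cV: "c \<in> verts inc F" using ec(1,2) by (auto simp: verts_iff)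
    have dc: "deg inc F c = 2" using less.prems(6) cV ec(3) False by auto
    have wf': "wf_edges inc F'" using wf_subset[OF less.prems(2)] unfolding F'_def by blast
    have dc': "deg inc F' c = 1" using deg_remove_in[where inc=inc, OF fF ec(1) _ ec(5), where v=c] ec(2) dc
      unfolding F'_def by simp
    have bne: "b \<notin> inc e" using ec(2) False less.prems(3) by auto
    have db': "deg inc F' b = 1" using deg_remove_other[where inc=inc, OF fF ec(1) bne] less.prems(5) unfolding F'_def by simp
    have fF': "finite F'" using fF unfolding F'_def by simp
    have cV': "c \<in> verts inc F'" using deg_pos[OF fF', where inc=inc and v=c] dc' by simp
    have others: "\<forall>v\<in>verts inc F' - {c, b}. deg inc F' v = 2"
    proof
      fix v assume v: "v \<in> verts inc F' - {c, b}"
      have "v \<in> verts inc F" using v verts_mono[of "F - {e}" F inc] unfolding F'_def by blast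
      moreover have "v \<noteq> a" using v anot unfolding F'_def by blast
      ultimately have "deg inc F v = 2" using less.prems(6) v by blast
      moreover have "v \<notin> inc e" using v \<open>v \<noteq> a\<close> ec(2) by auto
      ultimately show "deg inc F' v = 2" using deg_remove_other[where inc=inc, OF fF ec(1)] unfolding F'_def by simp
    qed
    have ns': "nosplitU inc {} F'" using nosplit_remove[OF less.prems(7) ec(1,2) anot] cV' unfolding F'_def by blast
    have lt: "card F' < n" using card_Diff1_less[OF fF ec(1)] less.prems(1) unfolding F'_def by simp
    have cb: "c \<noteq> b" using False by simp
    have p': "is_path inc (verts inc F') F' b c"
      using less.IH[OF lt refl wf' cb dc' db' others ns'] .
    have eF': "e \<notin> F'" unfolding F'_def by simp
    have ie: "inc e = {c, a}" using ec(2) by (simp add: insert_commute)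
    have aF': "a \<notin> verts inc F'" using anot unfolding F'_def .
    have "is_path inc (insert a (verts inc F')) (insert e F') b a" by (rule path_snoc[OF p' aF' eF' ie])
    moreover have "insert e F' = F" using ec(1) unfolding F'_def by auto
    moreover have "insert a (verts inc F') = verts inc F"
    proof -
      have "verts inc F = verts inc (insert e F')" using \<open>insert e F' = F\<close> by simp
      also have "\<dots> = {a, c} \<union> verts inc F'" using ec(2) by (simp add: verts_insert)
      finally show ?thesis using cV' by auto
    qed
    ultimately show ?thesis by simp
  qed
qed

lemma lolli_ear:
  "card F = n \<Longrightarrow> wf_edges inc F \<Longrightarrow> y \<noteq> a \<Longrightarrow> deg inc F a = 1 \<Longrightarrow> deg inc F y = 3 \<Longrightarrow>
   (\<forall>v\<in>verts inc F - {a, y}. deg inc F v = 2) \<Longrightarrow> nosplitU inc {} F \<Longrightarrow>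
   is_lollipop inc (verts inc F) F a"
proof (induction n arbitrary: F a rule: less_induct)
  case (less n F a)
  have fF: "finite F" using less.prems(2) wf_finite by blast
  obtain e c where ec: "e \<in> F" "inc e = {a, c}" "a \<noteq> c" "{e\<in>F. a \<in> inc e} = {e}" "cw inc e = 1"
    using pendant[OF less.prems(2,4)] by blast
  have anot: "a \<notin> verts inc (F - {e})" using pendant_not_in[OF ec(4)] .
  define F' where "F' = F - {e}"
  have wf': "wf_edges inc F'" using wf_subset[OF less.prems(2)] unfolding F'_def by blast
  have fF': "finite F'" using fF unfolding F'_def by simp
  have eq1: "insert e F' = F" using ec(1) unfolding F'_def by auto
  have cV: "c \<in> verts inc F" using ec(1,2) by (auto simp: verts_iff)
  show ?case
  proof (cases "c = y")
    case True
    have dy': "deg inc F' y = 2" using deg_remove_in[where inc=inc, OF fF ec(1) _ ec(5), where v=y] ec(2) True less.prems(5)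
      unfolding F'_def by simp
    have yV': "y \<in> verts inc F'" using deg_pos[OF fF', where inc=inc and v=y] dy' by simp
    have ns': "nosplitU inc {} F'" using nosplit_remove[OF less.prems(7) ec(1,2) anot] yV' True
      unfolding F'_def by blast
    have F'ne: "F' \<noteq> {}" using yV' by auto
    have cyc: "is_cycle inc (verts inc F') F'"
      unfolding is_cycle_def
    proof (intro conjI)
      show "finite_gr inc (verts inc F') F'" unfolding finite_gr_def
        using fF' verts_finite[OF wf'] by (auto simp: verts_iff)
      show "connected_gr inc (verts inc F') F'" using nosplit_conn[OF wf' F'ne ns'] .
      show "\<forall>v\<in>verts inc F'. deg inc F' v = 2"
      proof
        fix v assume v: "v \<in> verts inc F'"
        show "deg inc F' v = 2"
        proof (cases "v = y")
          case True
          then show ?thesis using dy' by simp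
        next
          case False
          have "v \<in> verts inc F" using v verts_mono[of "F - {e}" F inc] unfolding F'_def by blast
          moreover have "v \<noteq> a" using v anot unfolding F'_def by blast
          ultimately have "deg inc F v = 2" using less.prems(6) False by blast
          moreover have "v \<notin> inc e" using \<open>v \<noteq> a\<close> False ec(2) \<open>c = y\<close> by auto
          ultimately show ?thesis using deg_remove_other[where inc=inc, OF fF ec(1)] unfolding F'_def by simp
        qed
      qed
    qed
    have pth: "is_path inc {y, a} {e} y a" using path_single[of inc e y a] ec(2,3) True
      by (simp add: insert_commute)
    have aW: "a \<notin> verts inc F'" using anot unfolding F'_def .
    have "verts inc F' \<inter> {y, a} = {y}" using aW yV' by blast
    moreover have "F' \<inter> {e} = {}" unfolding F'_def by auto
    moreover have "verts inc F = verts inc F' \<union> {y, a}"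
    proof -
      have "verts inc F = verts inc (insert e F')" using eq1 by simp
      also have "\<dots> = {a, c} \<union> verts inc F'" using ec(2) by (simp add: verts_insert)
      finally show ?thesis using True by blast
    qed
    moreover have "F = F' \<union> {e}" using eq1 by blast
    ultimately show ?thesis unfolding is_lollipop_def using cyc pth by blast
  next
    case False
    have dc: "deg inc F c = 2" using less.prems(6) cV ec(3) False by auto
    have dc': "deg inc F' c = 1" using deg_remove_in[where inc=inc, OF fF ec(1) _ ec(5), where v=c] ec(2) dc
      unfolding F'_def by simp
    have yne: "y \<notin> inc e" using ec(2) False less.prems(3) by auto
    have dy': "deg inc F' y = 3" using deg_remove_other[where inc=inc, OF fF ec(1) yne] less.prems(5) unfolding F'_def by simp
    have cV': "c \<in> verts inc F'" using deg_pos[OF fF', where inc=inc and v=c] dc' by simp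
    have others: "\<forall>v\<in>verts inc F' - {c, y}. deg inc F' v = 2"
    proof
      fix v assume v: "v \<in> verts inc F' - {c, y}"
      have "v \<in> verts inc F" using v verts_mono[of "F - {e}" F inc] unfolding F'_def by blast
      moreover have "v \<noteq> a" using v anot unfolding F'_def by blast
      ultimately have "deg inc F v = 2" using less.prems(6) v by blast
      moreover have "v \<notin> inc e" using v \<open>v \<noteq> a\<close> ec(2) by auto
      ultimately show "deg inc F' v = 2" using deg_remove_other[where inc=inc, OF fF ec(1)] unfolding F'_def by simp
    qed
    have ns': "nosplitU inc {} F'" using nosplit_remove[OF less.prems(7) ec(1,2) anot] cV' unfolding F'_def by blast
    have lt: "card F' < n" using card_Diff1_less[OF fF ec(1)] less.prems(1) unfolding F'_def by simp
    have yc: "y \<noteq> c" using False by simp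
    have l': "is_lollipop inc (verts inc F') F' c"
      using less.IH[OF lt refl wf' yc dc' dy' others ns'] .
    then obtain W1 F1 W2 F2 y' where l: "is_cycle inc W1 F1" "is_path inc W2 F2 y' c"
      "W1 \<inter> W2 = {y'}" "F1 \<inter> F2 = {}" "verts inc F' = W1 \<union> W2" "F' = F1 \<union> F2"
      unfolding is_lollipop_def by blast
    have aW: "a \<notin> verts inc F'" using anot unfolding F'_def .
    have eF': "e \<notin> F'" unfolding F'_def by simp
    have aW2: "a \<notin> W2" using aW l(5) by blast
    have eF2: "e \<notin> F2" using eF' l(6) by blast
    have ie: "inc e = {c, a}" using ec(2) by (simp add: insert_commute)
    have p2: "is_path inc (insert a W2) (insert e F2) y' a" by (rule path_snoc[OF l(2) aW2 eF2 ie])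
    have "W1 \<inter> insert a W2 = {y'}" using l(3,5) aW by auto
    moreover have "F1 \<inter> insert e F2 = {}" using l(4,6) eF' by auto
    moreover have "verts inc F = W1 \<union> insert a W2"
    proof -
      have "verts inc F = verts inc (insert e F')" using eq1 by simp
      also have "\<dots> = {a, c} \<union> verts inc F'" using ec(2) by (simp add: verts_insert)
      finally show ?thesis using cV' l(5) by auto
    qed
    moreover have "F = F1 \<union> insert e F2" using eq1 l(6) by auto
    ultimately show ?thesis unfolding is_lollipop_def using l(1) p2 by blast
  qed
qed

lemma card_le1_mem:
  assumes "finite S" "card S \<le> 1" "x \<in> S"
  shows "S = {x}"
proof -
  have "card S \<noteq> 0" using assms by auto
  then have "card S = 1" using assms(2) by linarith
  then obtain z where z: "S = {z}" using card_1_singletonE by blast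
  then show ?thesis using assms(3) by simp
qed

lemma all_inc_sub: "\<forall>e\<in>A. inc e \<subseteq> verts inc A"
  unfolding verts_def by blast

lemma cw_two: "card (inc e) = 2 \<Longrightarrow> cw inc e = 1"
  unfolding cw_def is_loop_def by simp

lemma sum_minus2:
  assumes "finite N" "\<forall>v\<in>N. (f v :: nat) \<ge> 2"
  shows "sum f N = sum (\<lambda>v. f v - 2) N + 2 * card N"
proof -
  have "sum f N = sum (\<lambda>v. (f v - 2) + 2) N" using assms(2) by (intro sum.cong) auto
  also have "\<dots> = sum (\<lambda>v. f v - 2) N + sum (\<lambda>v. 2) N" by (rule sum.distrib)
  also have "\<dots> = sum (\<lambda>v. f v - 2) N + 2 * card N" by simp
  finally show ?thesis .
qed

lemma exc_one:
  assumes "finite N" "\<forall>v\<in>N. (f v :: nat) \<ge> 2" "sum f N = 2 * card N + 1"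
  shows "\<exists>y\<in>N. f y = 3 \<and> (\<forall>v\<in>N - {y}. f v = 2)"
proof -
  define g where "g v = f v - 2" for v
  have sg: "sum g N = 1" using sum_minus2[OF assms(1,2)] assms(3) unfolding g_def by simp
  obtain y where y: "y \<in> N" "g y \<noteq> 0"
  proof (rule ccontr)
    assume "\<not> thesis"
    then have "\<forall>y\<in>N. g y = 0" using that by blast
    then have "sum g N = 0" by simp
    then show False using sg by simp
  qed
  have "sum g N = g y + sum g (N - {y})" using sum.remove[OF assms(1) y(1)] by simp
  then have gy: "g y = 1" and rest: "sum g (N - {y}) = 0" using sg y(2) by auto
  have "\<forall>v\<in>N - {y}. g v = 0" using rest assms(1) by simp
  then show ?thesis using gy y(1) assms(2) unfolding g_def by (intro bexI[of _ y]) force+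
qed

lemma exc_zero:
  assumes "finite N" "\<forall>v\<in>N. (f v :: nat) \<ge> 2" "sum f N = 2 * card N"
  shows "\<forall>v\<in>N. f v = 2"
proof -
  have "sum (\<lambda>v. f v - 2) N = 0" using sum_minus2[OF assms(1,2)] assms(3) by simp
  then have "\<forall>v\<in>N. f v - 2 = 0" using assms(1) by simp
  then show ?thesis using assms(2) by force
qed

lemma ear:
  assumes wf: "wf_edges inc F" and Fne: "F \<noteq> {}"
    and H1: "card F = card (verts inc F - U) + 1"
    and H2: "\<forall>Q. Q \<subseteq> F \<and> Q \<noteq> F \<longrightarrow> card Q \<le> card (verts inc Q - U)"
  shows "(\<exists>x y. is_path inc (verts inc F) F x y \<and> U \<inter> verts inc F = {x, y}) \<or>
         (\<exists>x. is_lollipop inc (verts inc F) F x \<and> U \<inter> verts inc F = {x}) \<or>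
         (is_cycle inc (verts inc F) F \<and> card (U \<inter> verts inc F) = 1) \<or>
         (is_bicycle inc (verts inc F) F \<and> U \<inter> verts inc F = {})"
proof -
  have fF: "finite F" using wf wf_finite by blast
  have fV: "finite (verts inc F)" using verts_finite[OF wf] .
  define N where "N = verts inc F - U"
  have fN: "finite N" using fV N_def by simp
  have cF: "card F = card N + 1" using H1 N_def by simp
  have fgr: "finite_gr inc (verts inc F) F" unfolding finite_gr_def using fF fV all_inc_sub[of F inc] by blast
  have D1: "card {e\<in>F. v \<in> inc e} \<ge> 2" if vN: "v \<in> N" for v
  proof (rule ccontr)
    assume "\<not> card {e\<in>F. v \<in> inc e} \<ge> 2"
    then have c1: "card {e\<in>F. v \<in> inc e} \<le> 1" by simp
    have "v \<in> verts inc F" using vN N_def by simp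
    then obtain e where e: "e \<in> F" "v \<in> inc e" unfolding verts_iff by blast
    have S: "{e\<in>F. v \<in> inc e} = {e}" using card_le1_mem[OF _ c1] fF e by simp
    define Q where "Q = F - {e}"
    have "Q \<subseteq> F \<and> Q \<noteq> F" using e unfolding Q_def by auto
    then have cQ: "card Q \<le> card (verts inc Q - U)" using H2 by blast
    have vQ: "v \<notin> verts inc Q"
    proof
      assume "v \<in> verts inc Q"
      then obtain e' where "e' \<in> Q" "v \<in> inc e'" unfolding verts_iff by blast
      then have "e' \<in> {e\<in>F. v \<in> inc e}" unfolding Q_def by simp
      then have "e' = e" using S by simp
      then show False using \<open>e' \<in> Q\<close> unfolding Q_def by simp
    qed
    have sub: "verts inc Q - U \<subseteq> N - {v}"
      using vQ verts_mono[of Q F inc] unfolding Q_def N_def by blast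
    have "card (verts inc Q - U) \<le> card (N - {v})" using sub fN by (intro card_mono) auto
    also have "\<dots> = card N - 1" using vN fN by simp
    finally have "card Q \<le> card N - 1" using cQ by linarith
    moreover have "card Q = card N" using cF e fF unfolding Q_def by simp
    moreover have "card N \<ge> 1" using vN fN by (metis card_0_eq empty_iff less_one not_le)
    ultimately show False by linarith
  qed
  have D2: "nosplitU inc U F" unfolding nosplitU_def
  proof
    assume "\<exists>Q R. Q \<union> R = F \<and> Q \<inter> R = {} \<and> Q \<noteq> {} \<and> R \<noteq> {} \<and> verts inc Q \<inter> verts inc R \<subseteq> U"
    then obtain Q R where s: "Q \<union> R = F" "Q \<inter> R = {}" "Q \<noteq> {}" "R \<noteq> {}"
      "verts inc Q \<inter> verts inc R \<subseteq> U" by blast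
    have "Q \<subseteq> F \<and> Q \<noteq> F" "R \<subseteq> F \<and> R \<noteq> F" using s by auto
    then have cQ: "card Q \<le> card (verts inc Q - U)" and cR: "card R \<le> card (verts inc R - U)"
      using H2 by blast+
    have un: "(verts inc Q - U) \<union> (verts inc R - U) = N"
      using s(1) verts_Un[of inc Q R] unfolding N_def by auto
    have dj: "(verts inc Q - U) \<inter> (verts inc R - U) = {}" using s(5) by auto
    have f1: "finite (verts inc Q - U)" "finite (verts inc R - U)" using un fN
      by (metis finite_Un)+
    have "card N = card (verts inc Q - U) + card (verts inc R - U)"
      using card_Un_disjoint[OF f1 dj] un by simp
    moreover have "card F = card Q + card R"
      using card_Un_disjoint[of Q R] s(1,2) fF by (metis finite_Un)
    ultimately show False using cQ cR cF by linarith
  qed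
  have ns0: "nosplitU inc {} F" using D2 unfolding nosplitU_def by blast
  have conn: "connected_gr inc (verts inc F) F" using nosplit_conn[OF wf Fne ns0] .
  define w where "w e = card (N \<inter> inc e) * cw inc e" for e
  define T where "T = {e\<in>F. \<not> inc e \<subseteq> N}"
  define A where "A = {e\<in>F. inc e \<subseteq> N}"
  have fT: "finite T" using fF unfolding T_def by simp
  have sd: "(\<Sum>v\<in>N. deg inc F v) = 2 * card A + (\<Sum>e\<in>T. w e)"
    using deg_sum[OF fF fN, where inc=inc] wsum_eq[OF wf, where N=N] unfolding A_def T_def w_def by simp
  have cAT: "card F = card A + card T"
  proof -
    have "F = A \<union> T" "A \<inter> T = {}" unfolding A_def T_def by auto
    then show ?thesis using fF by (metis card_Un_disjoint finite_Un)
  qed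
  have dgN: "\<forall>v\<in>N. deg inc F v \<ge> 2"
  proof
    fix v assume "v \<in> N"
    then show "deg inc F v \<ge> 2" using D1[of v] deg_ge_card[OF fF, where inc=inc and v=v] by linarith
  qed
  have s1: "2 * card N \<le> (\<Sum>v\<in>N. deg inc F v)"
  proof -
    have "(\<Sum>v\<in>N. 2) \<le> (\<Sum>v\<in>N. deg inc F v)" using dgN by (intro sum_mono) auto
    then show ?thesis by simp
  qed
  have wT: "\<forall>e\<in>T. w e \<le> 1" using w_outside[OF wf] unfolding T_def w_def by blast
  have sT: "(\<Sum>e\<in>T. w e) \<le> card T" using sum_le_card[OF fT wT] .
  have cT: "card T \<le> 2" using s1 sd cAT cF sT by linarith
  have inT: "e \<in> T" if "e \<in> F" "v \<in> inc e" "v \<notin> N" for e v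
    using that unfolding T_def by blast
  have VU: "v \<in> U" if "v \<in> verts inc F" "v \<notin> N" for v
    using that unfolding N_def by blast
  have card_cases: "card T = 0 \<or> card T = 1 \<or> card T = 2" using cT by linarith
  consider (czero) "card T = 0" | (cone) "card T = 1" | (ctwo) "card T = 2" using cT by linarith
  then show ?thesis
  proof cases
    case czero
    note c0 = czero
      then have T0: "T = {}" using fT by simp
      have allN: "\<forall>e\<in>F. inc e \<subseteq> N" using T0 unfolding T_def by blast
      have VN: "verts inc F \<subseteq> N" using allN unfolding verts_def by blast
      then have NV: "N = verts inc F" unfolding N_def by blast
      have UV: "U \<inter> verts inc F = {}" using NV unfolding N_def by blast
      have nleaf: "\<forall>v\<in>verts inc F. \<not> is_leaf inc F v"
      proof
        fix v assume "v \<in> verts inc F"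
        then have "card {e\<in>F. v \<in> inc e} \<ge> 2" using D1 NV by blast
        then show "\<not> is_leaf inc F v" unfolding is_leaf_def by auto
      qed
      have "int (card F) - int (card (verts inc F)) = 1" using cF NV by simp
      then have "is_bicycle inc (verts inc F) F" unfolding is_bicycle_def using fgr conn nleaf by blast
      then show ?thesis using UV by blast
  next
    case cone
    note c1 = cone
      then obtain e0 where T1: "T = {e0}" using card_1_singletonE by blast
      have e0F: "e0 \<in> F" and e0N: "\<not> inc e0 \<subseteq> N" using T1 unfolding T_def by auto
      have "w e0 \<le> 1" using wT T1 by simp
      then have "w e0 = 0 \<or> w e0 = 1" by linarith
      then have ?thesis
      proof
        assume w0: "w e0 = 0"
        have "N \<inter> inc e0 = {}" using w_zero[of N inc e0] w0 wf_inc_finite[OF wf e0F] unfolding w_def by simp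
        then have incU: "inc e0 \<subseteq> U" using all_inc_sub[of F inc] e0F unfolding N_def by blast
        have Fe0: "F = {e0}"
        proof (rule ccontr)
          assume "F \<noteq> {e0}"
          then have Rne: "F - {e0} \<noteq> {}" using e0F by auto
          have a1: "{e0} \<union> (F - {e0}) = F" "{e0} \<inter> (F - {e0}) = {}" "{e0} \<noteq> {}" using e0F by auto
          have a2: "verts inc {e0} \<inter> verts inc (F - {e0}) \<subseteq> U"
            using incU by (auto simp: verts_insert)
          show False by (rule nosplitU_E[OF D2 a1 Rne a2])
        qed
        have VF: "verts inc F = inc e0" using Fe0 by (simp add: verts_insert)
        have "card (inc e0) = 1 \<or> card (inc e0) = 2" using wf_card[OF wf e0F] .
        then show ?thesis
        proof
          assume ci: "card (inc e0) = 1"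
          then obtain u where u: "inc e0 = {u}" using card_1_singletonE by blast
          have Su: "{e\<in>F. u \<in> inc e} = {e0}" using Fe0 u by auto
          have "deg inc F u = cw inc e0" by (rule deg_singleton_set[OF fF Su])
          then have du: "deg inc F u = 2" using ci unfolding cw_def is_loop_def by simp
          have "is_cycle inc (verts inc F) F" unfolding is_cycle_def
            using fgr VF u conn_single[of inc u F] du by simp
          moreover have "card (U \<inter> verts inc F) = 1" using VF u incU by simp
          ultimately show ?thesis by blast
        next
          assume ci: "card (inc e0) = 2"
          then obtain p q where pq: "inc e0 = {p, q}" "p \<noteq> q" by (auto simp: card_2_iff)
          have "is_path inc {p, q} {e0} p q" using path_single[where inc=inc, OF pq] .
          then have "is_path inc (verts inc F) F p q" using VF pq Fe0 by simp
          moreover have "U \<inter> verts inc F = {p, q}" using VF pq incU by auto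
          ultimately show ?thesis by blast
        qed
      next
        assume w1: "w e0 = 1"
        obtain u n0 where un: "inc e0 = {u, n0}" "u \<noteq> n0" "u \<notin> N" "n0 \<in> N"
          using w_one[OF wf e0F] w1 unfolding w_def by blast
        have uV: "u \<in> verts inc F" using un(1) e0F unfolding verts_iff by blast
        have uU: "u \<in> U" using VU[OF uV un(3)] .
        have sdeg: "(\<Sum>v\<in>N. deg inc F v) = 2 * card N + 1" using sd cAT cF c1 T1 w1 by simp
        obtain y where y: "y \<in> N" "deg inc F y = 3" "\<forall>v\<in>N - {y}. deg inc F v = 2"
          using exc_one[OF fN dgN sdeg] by blast
        have onlyu: "v = u" if vV: "v \<in> verts inc F" and vU: "v \<in> U" for v
        proof -
          obtain e where e: "e \<in> F" "v \<in> inc e" using vV unfolding verts_iff by blast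
          have "v \<notin> N" using vU unfolding N_def by blast
          then have "e \<in> T" using inT[OF e] by simp
          then have "e = e0" using T1 by simp
          then have "v = u \<or> v = n0" using e un(1) by simp
          then show ?thesis using un(4) \<open>v \<notin> N\<close> by blast
        qed
        have Su: "{e\<in>F. u \<in> inc e} = {e0}"
        proof
          show "{e\<in>F. u \<in> inc e} \<subseteq> {e0}"
          proof
            fix e assume "e \<in> {e\<in>F. u \<in> inc e}"
            then have "e \<in> T" using inT[of e u] un(3) by simp
            then show "e \<in> {e0}" using T1 by simp
          qed
          show "{e0} \<subseteq> {e\<in>F. u \<in> inc e}" using e0F un(1) by simp
        qed
        have cw0: "cw inc e0 = 1" using cw_two[of inc e0] un(1,2) by simp
        have du: "deg inc F u = 1" using deg_singleton_set[OF fF Su] cw0 by simp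
        have yu: "y \<noteq> u" using y(1) un(3) by blast
        have others: "\<forall>v\<in>verts inc F - {u, y}. deg inc F v = 2"
        proof
          fix v assume v: "v \<in> verts inc F - {u, y}"
          have "v \<notin> U" using onlyu v by blast
          then have "v \<in> N" using v unfolding N_def by blast
          then show "deg inc F v = 2" using y(3) v by blast
        qed
        have "is_lollipop inc (verts inc F) F u" using lolli_ear[OF refl wf yu du y(2) others ns0] .
        moreover have "U \<inter> verts inc F = {u}" using onlyu uU uV by blast
        ultimately show ?thesis by blast
      qed
      then show ?thesis .
  next
    case ctwo
    note c2 = ctwo
      then obtain e1 e2 where T2: "T = {e1, e2}" "e1 \<noteq> e2" by (auto simp: card_2_iff)
      have e1F: "e1 \<in> F" and e2F: "e2 \<in> F" using T2 unfolding T_def by auto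
      have w12: "w e1 \<le> 1" "w e2 \<le> 1" using wT T2 by auto
      have "(\<Sum>e\<in>T. w e) = w e1 + w e2" using T2 by simp
      then have ww: "w e1 = 1" "w e2 = 1" using s1 sd cAT cF c2 w12 by linarith+
      have sdeg: "(\<Sum>v\<in>N. deg inc F v) = 2 * card N"
        using sd cAT cF c2 \<open>(\<Sum>e\<in>T. w e) = w e1 + w e2\<close> ww by simp
      have dN2: "\<forall>v\<in>N. deg inc F v = 2" using exc_zero[OF fN dgN sdeg] .
      obtain u1 n1 where un1: "inc e1 = {u1, n1}" "u1 \<noteq> n1" "u1 \<notin> N" "n1 \<in> N"
        using w_one[OF wf e1F] ww(1) unfolding w_def by blast
      obtain u2 n2 where un2: "inc e2 = {u2, n2}" "u2 \<noteq> n2" "u2 \<notin> N" "n2 \<in> N"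
        using w_one[OF wf e2F] ww(2) unfolding w_def by blast
      have u1V: "u1 \<in> verts inc F" using un1(1) e1F unfolding verts_iff by blast
      have u2V: "u2 \<in> verts inc F" using un2(1) e2F unfolding verts_iff by blast
      have u1U: "u1 \<in> U" using VU[OF u1V un1(3)] .
      have u2U: "u2 \<in> U" using VU[OF u2V un2(3)] .
      have only: "v = u1 \<or> v = u2" if vV: "v \<in> verts inc F" and vU: "v \<in> U" for v
      proof -
        obtain e where e: "e \<in> F" "v \<in> inc e" using vV unfolding verts_iff by blast
        have "v \<notin> N" using vU unfolding N_def by blast
        then have "e \<in> T" using inT[OF e] by simp
        then have "e = e1 \<or> e = e2" using T2 by simp
        then have "v = u1 \<or> v = n1 \<or> v = u2 \<or> v = n2" using e un1(1) un2(1) by auto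
        then show ?thesis using un1(4) un2(4) \<open>v \<notin> N\<close> by blast
      qed
      have Ssub: "{e\<in>F. v \<in> inc e} \<subseteq> {e1, e2}" if "v \<notin> N" for v
        using inT[of _ v] that T2 by blast
      have cw1: "cw inc e1 = 1" using cw_two[of inc e1] un1(1,2) by simp
      have cw2: "cw inc e2 = 1" using cw_two[of inc e2] un2(1,2) by simp
      have ?thesis
      proof (cases "u1 = u2")
        case True
        have Su: "{e\<in>F. u1 \<in> inc e} = {e1, e2}"
          using Ssub[OF un1(3)] e1F e2F un1(1) un2(1) True by auto
        have du: "deg inc F u1 = 2" using deg_pair_set[OF fF Su T2(2)] cw1 cw2 by simp
        have alld: "\<forall>v\<in>verts inc F. deg inc F v = 2"
        proof
          fix v assume v: "v \<in> verts inc F"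
          show "deg inc F v = 2"
          proof (cases "v \<in> N")
            case True
            then show ?thesis using dN2 by blast
          next
            case False
            then have "v \<in> U" using VU v by blast
            then have "v = u1" using only v True by blast
            then show ?thesis using du by simp
          qed
        qed
        have "is_cycle inc (verts inc F) F" unfolding is_cycle_def using fgr conn alld by blast
        moreover have "U \<inter> verts inc F = {u1}" using only u1U u1V True by blast
        ultimately show ?thesis by simp
      next
        case False
        have Su1: "{e\<in>F. u1 \<in> inc e} = {e1}"
        proof -
          have "u1 \<notin> inc e2" using un2(1) False un2(4) un1(3) by auto
          then show ?thesis using Ssub[OF un1(3)] e1F un1(1) by auto
        qed
        have Su2: "{e\<in>F. u2 \<in> inc e} = {e2}"
        proof -
          have "u2 \<notin> inc e1" using un1(1) False un1(4) un2(3) by auto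
          then show ?thesis using Ssub[OF un2(3)] e2F un2(1) by auto
        qed
        have d1: "deg inc F u1 = 1" using deg_singleton_set[OF fF Su1] cw1 by simp
        have d2: "deg inc F u2 = 1" using deg_singleton_set[OF fF Su2] cw2 by simp
        have others: "\<forall>v\<in>verts inc F - {u1, u2}. deg inc F v = 2"
        proof
          fix v assume v: "v \<in> verts inc F - {u1, u2}"
          have "v \<notin> U" using only v by blast
          then have "v \<in> N" using v unfolding N_def by blast
          then show "deg inc F v = 2" using dN2 by blast
        qed
        have "is_path inc (verts inc F) F u2 u1" using path_ear[OF refl wf False d1 d2 others ns0] .
        moreover have "U \<inter> verts inc F = {u2, u1}" using only u1U u2U u1V u2V by blast
        ultimately show ?thesis by blast
      qed
      then show ?thesis .

  qed
qed

definition exc :: "('e \<Rightarrow> 'v set) \<Rightarrow> 'e set \<Rightarrow> int" where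
  "exc inc X = int (card X) - int (card (verts inc X))"

lemma graph_wf: "graph V E inc \<Longrightarrow> X \<subseteq> E \<Longrightarrow> wf_edges inc X"
  unfolding graph_def wf_edges_def by (meson finite_subset subsetD)

lemma exc_empty: "exc inc {} = 0" unfolding exc_def by simp

lemma chain:
  assumes "wf_edges inc X" "k \<ge> 1" "exc inc X \<ge> int k"
  shows "\<exists>D\<subseteq>X. D \<noteq> {} \<and> exc inc D = int k"
  using assms(1,3)
proof (induction "card X" arbitrary: X rule: less_induct)
  case less
  have Xne: "X \<noteq> {}" using less.prems(2) assms(2) exc_empty[of inc] by auto
  show ?case
  proof (cases "exc inc X = int k")
    case True
    then show ?thesis using Xne by blast
  next
    case False
    then have gt: "exc inc X > int k" using less.prems(2) by simp
    obtain e where e: "e \<in> X" using Xne by blast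
    have fX: "finite X" using less.prems(1) wf_finite by blast
    have fV: "finite (verts inc X)" using verts_finite[OF less.prems(1)] .
    have "verts inc (X - {e}) \<subseteq> verts inc X" by (rule verts_mono) auto
    then have cv: "card (verts inc (X - {e})) \<le> card (verts inc X)" using fV by (rule card_mono[rotated])
    have pos: "card X > 0" using fX e card_gt_0_iff by blast
    have cX: "card (X - {e}) + 1 = card X" using e fX pos by simp
    have ge: "exc inc (X - {e}) \<ge> int k" using gt cv cX unfolding exc_def by linarith
    have lt: "card (X - {e}) < card X" using card_Diff1_less[OF fX e] .
    have wf': "wf_edges inc (X - {e})" using wf_subset[OF less.prems(1)] by blast
    obtain D where "D \<subseteq> X - {e}" "D \<noteq> {}" "exc inc D = int k" using less.hyps[OF lt wf' ge] by blast
    then show ?thesis by blast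
  qed
qed

lemma circ_char:
  assumes g: "graph V E inc" and k: "k \<ge> 1"
  shows "Mk_circuit E inc k C \<longleftrightarrow>
    (C \<subseteq> E \<and> C \<noteq> {} \<and> exc inc C = int k \<and> (\<forall>D. D \<subseteq> C \<and> D \<noteq> C \<longrightarrow> exc inc D < int k))"
proof
  assume M: "Mk_circuit E inc k C"
  have CS: "C \<subseteq> E" "C \<noteq> {}" "card C = card (verts inc C) + k"
    and mn: "\<forall>D. D \<subseteq> E \<and> D \<noteq> {} \<and> card D = card (verts inc D) + k \<longrightarrow> D \<subseteq> C \<longrightarrow> D = C"
    using M unfolding Mk_circuit_def Let_def by auto
  have eC: "exc inc C = int k" using CS(3) unfolding exc_def by simp
  have pr: "exc inc D < int k" if D: "D \<subseteq> C" "D \<noteq> C" for D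
  proof (rule ccontr)
    assume "\<not> exc inc D < int k"
    then have ge: "exc inc D \<ge> int k" by simp
    have wfD: "wf_edges inc D" using graph_wf[OF g] D(1) CS(1) by blast
    obtain D' where D': "D' \<subseteq> D" "D' \<noteq> {}" "exc inc D' = int k" using chain[OF wfD k ge] by blast
    have cd': "card D' = card (verts inc D') + k" using D'(3) unfolding exc_def by simp
    have DE: "D' \<subseteq> E" using D'(1) D(1) CS(1) by (meson subset_trans)
    have DC: "D' \<subseteq> C" using D'(1) D(1) by (meson subset_trans)
    have "D' = C" using mn[rule_format, OF conjI[OF DE conjI[OF D'(2) cd']] DC] .
    then show False using D D'(1) by blast
  qed
  show "C \<subseteq> E \<and> C \<noteq> {} \<and> exc inc C = int k \<and> (\<forall>D. D \<subseteq> C \<and> D \<noteq> C \<longrightarrow> exc inc D < int k)"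
    using CS eC pr by blast
next
  assume R: "C \<subseteq> E \<and> C \<noteq> {} \<and> exc inc C = int k \<and> (\<forall>D. D \<subseteq> C \<and> D \<noteq> C \<longrightarrow> exc inc D < int k)"
  have c: "card C = card (verts inc C) + k" using R unfolding exc_def by linarith
  have mn: "\<forall>D. D \<subseteq> E \<and> D \<noteq> {} \<and> card D = card (verts inc D) + k \<longrightarrow> D \<subseteq> C \<longrightarrow> D = C"
  proof (intro allI impI)
    fix D assume D: "D \<subseteq> E \<and> D \<noteq> {} \<and> card D = card (verts inc D) + k" "D \<subseteq> C"
    show "D = C"
    proof (rule ccontr)
      assume "D \<noteq> C"
      then have "exc inc D < int k" using R D(2) by blast
      moreover have "exc inc D = int k" using D(1) unfolding exc_def by simp
      ultimately show False by simp
    qed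
  qed
  show "Mk_circuit E inc k C" unfolding Mk_circuit_def Let_def using R c mn by auto
qed

lemma G_path:
  assumes p: "is_path inc W F x y" and UW: "U \<inter> W = {x, y}"
  shows "W = verts inc F \<and> int (card F) - int (card (W - U)) = 1 \<and>
         (\<forall>D. D \<subseteq> F \<and> D \<noteq> F \<longrightarrow> card D \<le> card (verts inc D - U))"
proof -
  have WV: "W = verts inc F" using path_verts[OF p] .
  have cW: "card W = card F + 1" using path_card[OF p] .
  have xy: "x \<in> W" "y \<in> W" "x \<noteq> y" using path_ends[OF p] by auto
  have fW: "finite W" using path_finite[OF p] by simp
  have "W - U = W - {x, y}" using UW by blast
  moreover have "card (W - {x, y}) = card W - 2" using xy fW by (simp add: card_Diff_subset)
  ultimately have "card (W - U) = card F - 1" using cW by simp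
  moreover have "card F \<ge> 1"
  proof -
    have "card {x, y} \<le> card W" using xy fW by (intro card_mono) auto
    then have "card W \<ge> 2" using xy(3) by simp
    then show ?thesis using cW by linarith
  qed
  ultimately have G1: "int (card F) - int (card (W - U)) = 1" by simp
  have G2: "\<forall>D. D \<subseteq> F \<and> D \<noteq> F \<longrightarrow> card D \<le> card (verts inc D - U)"
  proof (intro allI impI)
    fix D assume D: "D \<subseteq> F \<and> D \<noteq> F"
    have c1: "card D \<le> card (verts inc D - {x, y})" using path_sub_both[OF p] D by blast
    have vDW: "verts inc D \<subseteq> W" using verts_mono[of D F inc] D WV by blast
    have sub: "verts inc D - {x, y} \<subseteq> verts inc D - U" using vDW UW by blast
    have "finite (verts inc D - U)" using vDW fW finite_subset by blast
    then have "card (verts inc D - {x, y}) \<le> card (verts inc D - U)" using sub card_mono by blast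
    then show "card D \<le> card (verts inc D - U)" using c1 by linarith
  qed
  show ?thesis using WV G1 G2 by blast
qed

lemma G_cycle:
  assumes wf: "wf_edges inc F" and c: "is_cycle inc W F" and UW: "card (U \<inter> W) = 1"
  shows "W = verts inc F \<and> int (card F) - int (card (W - U)) = 1 \<and>
         (\<forall>D. D \<subseteq> F \<and> D \<noteq> F \<longrightarrow> card D \<le> card (verts inc D - U))"
proof -
  note cf = cycle_facts[OF wf c]
  have fg: "\<forall>e\<in>F. inc e \<subseteq> W" using c unfolding is_cycle_def finite_gr_def by auto
  have dg: "\<forall>v\<in>W. deg inc F v \<ge> 2" using c unfolding is_cycle_def by auto
  have "card (W - U) = card W - card (W \<inter> U)" using cf(4) by (simp add: card_Diff_subset_Int)
  moreover have "card (W \<inter> U) = 1" using UW by (simp add: Int_commute)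
  moreover have "card W \<ge> 1" using UW cf(4) by (metis card_mono inf_le2 Int_commute)
  ultimately have G1: "int (card F) - int (card (W - U)) = 1" using cf(2) by simp
  have G2: "\<forall>D. D \<subseteq> F \<and> D \<noteq> F \<longrightarrow> card D \<le> card (verts inc D - U)"
  proof (intro allI impI)
    fix D assume D: "D \<subseteq> F \<and> D \<noteq> F"
    show "card D \<le> card (verts inc D - U)"
    proof (cases "D = {}")
      case True
      then show ?thesis by simp
    next
      case False
      have lt: "card D + 1 \<le> card (verts inc D)"
      proof (rule ccontr)
        assume "\<not> card D + 1 \<le> card (verts inc D)"
        then have "int (card F) - int (card W) \<le> int (card D) - int (card (verts inc D))" using cf(2) by simp
        then show False using sub_lemma[OF wf cf(4) fg cf(3) dg] D False by blast
      qed
      have vDW: "verts inc D \<subseteq> W" using verts_mono[of D F inc] D cf(1) by blast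
      have fvD: "finite (verts inc D)" using vDW cf(4) finite_subset by blast
      have "card (verts inc D \<inter> U) \<le> card (W \<inter> U)" using vDW cf(4) by (intro card_mono) auto
      then have "card (verts inc D \<inter> U) \<le> 1" using UW by (simp add: Int_commute)
      moreover have "card (verts inc D - U) = card (verts inc D) - card (verts inc D \<inter> U)"
        using fvD by (simp add: card_Diff_subset_Int)
      ultimately show ?thesis using lt by linarith
    qed
  qed
  show ?thesis using cf(1) G1 G2 by blast
qed

lemma G_bicycle:
  assumes wf: "wf_edges inc F" and b: "is_bicycle inc W F" and UW: "U \<inter> W = {}"
  shows "W = verts inc F \<and> int (card F) - int (card (W - U)) = 1 \<and>
         (\<forall>D. D \<subseteq> F \<and> D \<noteq> F \<longrightarrow> card D \<le> card (verts inc D - U))"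
proof -
  note bf = bicycle_facts[OF wf b]
  have fg: "\<forall>e\<in>F. inc e \<subseteq> W" using b unfolding is_bicycle_def finite_gr_def by auto
  have WU: "W - U = W" using UW by blast
  have G1: "int (card F) - int (card (W - U)) = 1" using bf(5) WU by simp
  have G2: "\<forall>D. D \<subseteq> F \<and> D \<noteq> F \<longrightarrow> card D \<le> card (verts inc D - U)"
  proof (intro allI impI)
    fix D assume D: "D \<subseteq> F \<and> D \<noteq> F"
    show "card D \<le> card (verts inc D - U)"
    proof (cases "D = {}")
      case True
      then show ?thesis by simp
    next
      case False
      have le: "card D \<le> card (verts inc D)"
      proof (rule ccontr)
        assume "\<not> card D \<le> card (verts inc D)"
        then have "int (card F) - int (card W) \<le> int (card D) - int (card (verts inc D))" using bf(5) by simp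
        then show False using sub_lemma[OF wf bf(4) fg bf(3) bf(2)] D False by blast
      qed
      have vDW: "verts inc D \<subseteq> W" using verts_mono[of D F inc] D bf(1) by blast
      then have "verts inc D - U = verts inc D" using UW by blast
      then show ?thesis using le by simp
    qed
  qed
  show ?thesis using bf(1) G1 G2 by blast
qed

lemma G_lolli:
  assumes wf: "wf_edges inc F" and l: "is_lollipop inc W F x" and UW: "U \<inter> W = {x}"
  shows "W = verts inc F \<and> int (card F) - int (card (W - U)) = 1 \<and>
         (\<forall>D. D \<subseteq> F \<and> D \<noteq> F \<longrightarrow> card D \<le> card (verts inc D - U))"
proof -
  obtain W1 F1 W2 F2 y where l': "is_cycle inc W1 F1" "is_path inc W2 F2 y x"
    "W1 \<inter> W2 = {y}" "F1 \<inter> F2 = {}" "W = W1 \<union> W2" "F = F1 \<union> F2"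
    using l unfolding is_lollipop_def by blast
  have wf1: "wf_edges inc F1" using wf_subset[OF wf] l'(6) by blast
  note cf = cycle_facts[OF wf1 l'(1)]
  have W2V: "W2 = verts inc F2" using path_verts[OF l'(2)] .
  have cW2: "card W2 = card F2 + 1" using path_card[OF l'(2)] .
  have yx: "y \<in> W2" "x \<in> W2" "y \<noteq> x" using path_ends[OF l'(2)] by auto
  have fW2: "finite W2" and fF2: "finite F2" using path_finite[OF l'(2)] by auto
  have fF1: "finite F1" using wf1 wf_finite by blast
  have xW1: "x \<notin> W1"
  proof
    assume "x \<in> W1"
    then have "x \<in> W1 \<inter> W2" using yx(2) by (rule IntI)
    then have "x = y" using l'(3) by simp
    then show False using yx(3) by simp
  qed
  have WV: "W = verts inc F" using l'(5,6) cf(1) W2V verts_Un[of inc F1 F2] by simp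
  have fW: "finite W" using l'(5) cf(4) fW2 by simp
  have cW: "card W + 1 = card W1 + card W2"
    using card_Un_Int[OF cf(4) fW2] l'(3,5) by simp
  have cF: "card F = card F1 + card F2" using card_Un_disjoint[OF fF1 fF2 l'(4)] l'(6) by simp
  have WUx: "W - U = W - {x}" using UW by blast
  have xW: "x \<in> W" using yx l'(5) by blast
  have pos: "card W > 0" using xW fW card_gt_0_iff by blast
  have cWU: "card (W - U) + 1 = card W" using WUx xW fW pos by simp
  have G1: "int (card F) - int (card (W - U)) = 1" using cWU cW cF cf(2) cW2 by linarith
  have fg1: "\<forall>e\<in>F1. inc e \<subseteq> W1" using l'(1) unfolding is_cycle_def finite_gr_def by auto
  have dg1: "\<forall>v\<in>W1. deg inc F1 v \<ge> 2" using l'(1) unfolding is_cycle_def by auto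
  have G2: "\<forall>D. D \<subseteq> F \<and> D \<noteq> F \<longrightarrow> card D \<le> card (verts inc D - U)"
  proof (intro allI impI)
    fix D assume D: "D \<subseteq> F \<and> D \<noteq> F"
    define A where "A = D \<inter> F1"
    define B where "B = D \<inter> F2"
    have DAB: "D = A \<union> B" using D l'(6) unfolding A_def B_def by blast
    have fA: "finite A" using fF1 unfolding A_def by simp
    have fB: "finite B" using fF2 unfolding B_def by simp
    have djAB: "A \<inter> B = {}" using l'(4) unfolding A_def B_def by blast
    have cD: "card D = card A + card B" using card_Un_disjoint[OF fA fB djAB] DAB by simp
    have vA: "verts inc A \<subseteq> W1" using verts_mono[of A F1 inc] cf(1) unfolding A_def by blast
    have vB: "verts inc B \<subseteq> W2" using verts_mono[of B F2 inc] W2V unfolding B_def by blast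
    have vD: "verts inc D = verts inc A \<union> verts inc B" using DAB verts_Un[of inc A B] by simp
    have xU: "x \<in> U" using UW by blast
    have vDU: "verts inc D - U = verts inc A \<union> (verts inc B - {x})"
    proof (rule set_eqI)
      fix v
      have e1: "v \<in> verts inc D - U \<longleftrightarrow> v \<in> verts inc D \<and> v \<noteq> x"
      proof
        assume "v \<in> verts inc D - U"
        then show "v \<in> verts inc D \<and> v \<noteq> x" using xU by blast
      next
        assume h: "v \<in> verts inc D \<and> v \<noteq> x"
        then have "v \<in> W1 \<or> v \<in> W2" using vD vA vB by blast
        then have "v \<in> W" using l'(5) by blast
        then have "v \<notin> U" using UW h by blast
        then show "v \<in> verts inc D - U" using h by blast
      qed
      have e2: "v \<in> verts inc A \<Longrightarrow> v \<noteq> x" using vA xW1 by blast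
      show "v \<in> verts inc D - U \<longleftrightarrow> v \<in> verts inc A \<union> (verts inc B - {x})"
        using e1 e2 vD by blast
    qed
    have fvA: "finite (verts inc A)" using vA cf(4) finite_subset by blast
    have fvB: "finite (verts inc B - {x})" using vB fW2 finite_subset by blast
    have inter: "verts inc A \<inter> (verts inc B - {x}) \<subseteq> {y}" using vA vB l'(3) by blast
    show "card D \<le> card (verts inc D - U)"
    proof (cases "A = F1")
      case True
      have BF2: "B \<subseteq> F2" "B \<noteq> F2"
      proof -
        show "B \<subseteq> F2" unfolding B_def by blast
        show "B \<noteq> F2"
        proof
          assume "B = F2"
          then have "D = F" using DAB True l'(6) by simp
          then show False using D by simp
        qed
      qed
      have cB: "card B \<le> card (verts inc B - {y, x})" using path_sub_both[OF l'(2) BF2] .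
      have vA1: "verts inc A = W1" using True cf(1) by simp
      have d2: "W1 \<inter> (verts inc B - {y, x}) = {}" using vB l'(3) by blast
      have fvB2: "finite (verts inc B - {y, x})" using vB fW2 finite_subset by blast
      have "card (W1 \<union> (verts inc B - {y, x})) = card W1 + card (verts inc B - {y, x})"
        using card_Un_disjoint[OF cf(4) fvB2 d2] .
      moreover have "W1 \<union> (verts inc B - {y, x}) \<subseteq> verts inc D - U" using vDU vA1 by blast
      moreover have "finite (verts inc D - U)" using vDU fvA fvB by simp
      ultimately have "card W1 + card (verts inc B - {y, x}) \<le> card (verts inc D - U)"
        by (metis card_mono)
      moreover have "card A = card W1" using True cf(2) by simp
      ultimately show ?thesis using cD cB by linarith
    next
      case False
      have cB: "card B \<le> card (verts inc B - {x})" using path_sub_end[OF l'(2)] unfolding B_def by blast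
      have cU: "card (verts inc D - U) + card (verts inc A \<inter> (verts inc B - {x})) =
                card (verts inc A) + card (verts inc B - {x})"
        using card_Un_Int[OF fvA fvB] vDU by simp
      show ?thesis
      proof (cases "A = {}")
        case True
        then have "card (verts inc D - U) = card (verts inc B - {x})" using vDU by simp
        then show ?thesis using cD cB True by simp
      next
        case Ane: False
        have lt: "card A + 1 \<le> card (verts inc A)"
        proof (rule ccontr)
          assume "\<not> card A + 1 \<le> card (verts inc A)"
          then have "int (card F1) - int (card W1) \<le> int (card A) - int (card (verts inc A))"
            using cf(2) by simp
          moreover have "A \<subseteq> F1" unfolding A_def by blast
          ultimately show False using sub_lemma[OF wf1 cf(4) fg1 cf(3) dg1] Ane False by blast
        qed
        have "card (verts inc A \<inter> (verts inc B - {x})) \<le> card {y}"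
          using inter by (intro card_mono) auto
        then have "card (verts inc A \<inter> (verts inc B - {x})) \<le> 1" by simp
        then show ?thesis using cU lt cB cD by linarith
      qed
    qed
  qed
  show ?thesis using WV G1 G2 by blast
qed

lemma shape_G:
  assumes wf: "wf_edges inc F"
    and sh: "(\<exists>x y. is_path inc W F x y \<and> U \<inter> W = {x, y}) \<or>
             (\<exists>x. is_lollipop inc W F x \<and> U \<inter> W = {x}) \<or>
             (is_cycle inc W F \<and> card (U \<inter> W) = 1) \<or>
             (is_bicycle inc W F \<and> U \<inter> W = {})"
  shows "W = verts inc F \<and> int (card F) - int (card (W - U)) = 1 \<and>
         (\<forall>D. D \<subseteq> F \<and> D \<noteq> F \<longrightarrow> card D \<le> card (verts inc D - U))"
  using sh
proof (elim disjE)
  assume "\<exists>x y. is_path inc W F x y \<and> U \<inter> W = {x, y}"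
  then obtain x y where p: "is_path inc W F x y" "U \<inter> W = {x, y}" by blast
  show ?thesis by (rule G_path[OF p])
next
  assume "\<exists>x. is_lollipop inc W F x \<and> U \<inter> W = {x}"
  then obtain x where p: "is_lollipop inc W F x" "U \<inter> W = {x}" by blast
  show ?thesis by (rule G_lolli[OF wf p])
next
  assume "is_cycle inc W F \<and> card (U \<inter> W) = 1"
  then have p: "is_cycle inc W F" "card (U \<inter> W) = 1" by auto
  show ?thesis by (rule G_cycle[OF wf p])
next
  assume "is_bicycle inc W F \<and> U \<inter> W = {}"
  then have p: "is_bicycle inc W F" "U \<inter> W = {}" by auto
  show ?thesis by (rule G_bicycle[OF wf p])
qed

lemma part_one:
  assumes g: "graph V E inc" and CE: "C \<subseteq> E"
  shows "Mk_circuit E inc 1 C \<longleftrightarrow> is_bicycle inc (verts inc C) C"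
proof
  assume M: "Mk_circuit E inc 1 C"
  have R: "C \<noteq> {}" "exc inc C = 1" "\<forall>D. D \<subseteq> C \<and> D \<noteq> C \<longrightarrow> exc inc D < 1"
    using circ_char[OF g, of 1 C] M by auto
  have wfC: "wf_edges inc C" using graph_wf[OF g CE] .
  have H1: "card C = card (verts inc C - {}) + 1" using R(2) unfolding exc_def by simp
  have H2: "\<forall>Q. Q \<subseteq> C \<and> Q \<noteq> C \<longrightarrow> card Q \<le> card (verts inc Q - {})"
  proof (intro allI impI)
    fix Q assume "Q \<subseteq> C \<and> Q \<noteq> C"
    then have "exc inc Q < 1" using R(3) by blast
    then show "card Q \<le> card (verts inc Q - {})" unfolding exc_def by simp
  qed
  have "(\<exists>x y. is_path inc (verts inc C) C x y \<and> {} \<inter> verts inc C = {x, y}) \<or>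
         (\<exists>x. is_lollipop inc (verts inc C) C x \<and> {} \<inter> verts inc C = {x}) \<or>
         (is_cycle inc (verts inc C) C \<and> card ({} \<inter> verts inc C) = 1) \<or>
         (is_bicycle inc (verts inc C) C \<and> {} \<inter> verts inc C = {})"
    by (rule ear[OF wfC R(1) H1 H2])
  then show "is_bicycle inc (verts inc C) C" by auto
next
  assume b: "is_bicycle inc (verts inc C) C"
  have wfC: "wf_edges inc C" using graph_wf[OF g CE] .
  note bf = bicycle_facts[OF wfC b]
  have fg: "\<forall>e\<in>C. inc e \<subseteq> verts inc C" using all_inc_sub .
  have Cne: "C \<noteq> {}" using bf(5) by auto
  have eC: "exc inc C = 1" using bf(5) unfolding exc_def .
  have pr: "\<forall>D. D \<subseteq> C \<and> D \<noteq> C \<longrightarrow> exc inc D < 1"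
  proof (intro allI impI)
    fix D assume D: "D \<subseteq> C \<and> D \<noteq> C"
    show "exc inc D < 1"
    proof (cases "D = {}")
      case True
      then show ?thesis unfolding exc_def by simp
    next
      case False
      show ?thesis
      proof (rule ccontr)
        assume "\<not> exc inc D < 1"
        then have "int (card C) - int (card (verts inc C)) \<le> int (card D) - int (card (verts inc D))"
          using bf(5) unfolding exc_def by simp
        then show False using sub_lemma[OF wfC bf(4) fg bf(3) bf(2)] D False by blast
      qed
    qed
  qed
  show "Mk_circuit E inc 1 C" using circ_char[OF g, of 1 C] CE Cne eC pr by simp
qed

lemma part_two_dir1:
  assumes g: "graph V E inc" and CE: "C \<subseteq> E" and k2: "k \<ge> 2" and M: "Mk_circuit E inc k C"
  shows "\<exists>C' W F. Mk_circuit E inc (k - 1) C' \<and> is_subgraph V E inc W F \<and> F \<inter> C' = {} \<and>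
               verts inc C = verts inc C' \<union> W \<and> C = C' \<union> F \<and>
               ((\<exists>x y. is_path inc W F x y \<and> verts inc C' \<inter> W = {x, y}) \<or>
                (\<exists>x. is_lollipop inc W F x \<and> verts inc C' \<inter> W = {x}) \<or>
                (is_cycle inc W F \<and> card (verts inc C' \<inter> W) = 1) \<or>
                (is_bicycle inc W F \<and> verts inc C' \<inter> W = {}))"
proof -
  have k1: "k \<ge> 1" using k2 by simp
  have km: "k - 1 \<ge> 1" using k2 by simp
  have R: "C \<noteq> {}" "exc inc C = int k" "\<forall>D. D \<subseteq> C \<and> D \<noteq> C \<longrightarrow> exc inc D < int k"
    using circ_char[OF g k1] M by auto
  have wfC: "wf_edges inc C" using graph_wf[OF g CE] .
  have fC: "finite C" using wfC wf_finite by blast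
  have "exc inc C \<ge> int (k - 1)" using R(2) k2 by simp
  then obtain D0 where D0: "D0 \<subseteq> C" "D0 \<noteq> {}" "exc inc D0 = int (k - 1)" using chain[OF wfC km] by blast
  define P where "P D \<longleftrightarrow> D \<subseteq> C \<and> D \<noteq> {} \<and> exc inc D = int (k - 1)" for D
  have PD0: "P D0" using D0 unfolding P_def by blast
  obtain C' where C': "P C'" "\<forall>D. P D \<longrightarrow> card C' \<le> card D"
    using ex_has_least_nat[where P=P and k=D0 and m=card, OF PD0] by blast
  have C'C: "C' \<subseteq> C" "C' \<noteq> {}" "exc inc C' = int (k - 1)" using C'(1) unfolding P_def by auto
  have C'E: "C' \<subseteq> E" using C'C(1) CE by blast
  have fC': "finite C'" using C'C(1) fC finite_subset by blast
  have circ': "Mk_circuit E inc (k - 1) C'"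
  proof -
    have "\<forall>D. D \<subseteq> C' \<and> D \<noteq> C' \<longrightarrow> exc inc D < int (k - 1)"
    proof (intro allI impI)
      fix D assume D: "D \<subseteq> C' \<and> D \<noteq> C'"
      show "exc inc D < int (k - 1)"
      proof (rule ccontr)
        assume "\<not> exc inc D < int (k - 1)"
        then have ge: "exc inc D \<ge> int (k - 1)" by simp
        have wfD: "wf_edges inc D" using graph_wf[OF g] D C'E by blast
        obtain D'' where D'': "D'' \<subseteq> D" "D'' \<noteq> {}" "exc inc D'' = int (k - 1)"
          using chain[OF wfD km ge] by blast
        then have "P D''" using D C'C unfolding P_def by blast
        then have "card C' \<le> card D''" using C'(2) by blast
        moreover have "D'' \<subset> C'" using D D''(1) by blast
        then have "card D'' < card C'" using psubset_card_mono[OF fC'] by blast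
        ultimately show False by simp
      qed
    qed
    then show ?thesis using circ_char[OF g km] C'C C'E by blast
  qed
  define F where "F = C - C'"
  define U where "U = verts inc C'"
  have CC': "C' \<noteq> C" using C'C(3) R(2) k2 by auto
  have Fne: "F \<noteq> {}" using CC' C'C(1) unfolding F_def by blast
  have wfF: "wf_edges inc F" using wf_subset[OF wfC] unfolding F_def by blast
  have wfC': "wf_edges inc C'" using wf_subset[OF wfC C'C(1)] .
  have fF: "finite F" using wfF wf_finite by blast
  have dj: "F \<inter> C' = {}" and CU: "C = C' \<union> F" using C'C(1) unfolding F_def by auto
  have vC: "verts inc C = U \<union> verts inc F" using CU verts_Un[of inc C' F] unfolding U_def by simp
  have fU: "finite U" using verts_finite[OF wfC'] unfolding U_def .
  have fVF: "finite (verts inc F)" using verts_finite[OF wfF] .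
  have cvu: "card (U \<union> X) = card U + card (X - U)" if "finite X" for X
  proof -
    have "U \<union> X = U \<union> (X - U)" by blast
    moreover have "U \<inter> (X - U) = {}" by blast
    ultimately show ?thesis using card_Un_disjoint[of U "X - U"] fU that by simp
  qed
  have cVC: "card (verts inc C) = card U + card (verts inc F - U)" using vC cvu[OF fVF] by simp
  have cC: "card C = card C' + card F" using card_Un_disjoint[OF fC' fF] dj CU by (simp add: Int_commute)
  have eC': "int (card C') - int (card U) = int k - 1" using C'C(3) km unfolding exc_def U_def by simp
  have H1: "card F = card (verts inc F - U) + 1" using R(2) eC' cVC cC unfolding exc_def by linarith
  have H2: "\<forall>Q. Q \<subseteq> F \<and> Q \<noteq> F \<longrightarrow> card Q \<le> card (verts inc Q - U)"
  proof (intro allI impI)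
    fix Q assume Q: "Q \<subseteq> F \<and> Q \<noteq> F"
    have sub: "C' \<union> Q \<subseteq> C" using Q C'C(1) unfolding F_def by blast
    have ne: "C' \<union> Q \<noteq> C"
    proof
      assume "C' \<union> Q = C"
      then have "F \<subseteq> Q" unfolding F_def by blast
      then show False using Q by blast
    qed
    have lt: "exc inc (C' \<union> Q) < int k" using R(3) sub ne by blast
    have fQ: "finite Q" using Q fF finite_subset by blast
    have djQ: "C' \<inter> Q = {}" using Q dj by blast
    have cD: "card (C' \<union> Q) = card C' + card Q" using card_Un_disjoint[OF fC' fQ djQ] .
    have wfQ: "wf_edges inc Q" using wf_subset[OF wfF] Q by blast
    have vD: "verts inc (C' \<union> Q) = U \<union> verts inc Q" using verts_Un[of inc C' Q] unfolding U_def by simp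
    have cvD: "card (verts inc (C' \<union> Q)) = card U + card (verts inc Q - U)"
      using vD cvu[OF verts_finite[OF wfQ]] by simp
    show "card Q \<le> card (verts inc Q - U)" using lt cD cvD eC' unfolding exc_def by linarith
  qed
  have sh: "(\<exists>x y. is_path inc (verts inc F) F x y \<and> U \<inter> verts inc F = {x, y}) \<or>
         (\<exists>x. is_lollipop inc (verts inc F) F x \<and> U \<inter> verts inc F = {x}) \<or>
         (is_cycle inc (verts inc F) F \<and> card (U \<inter> verts inc F) = 1) \<or>
         (is_bicycle inc (verts inc F) F \<and> U \<inter> verts inc F = {})"
    by (rule ear[OF wfF Fne H1 H2])
  have FE: "F \<subseteq> E" using CE unfolding F_def by blast
  have sg: "is_subgraph V E inc (verts inc F) F"
  proof -
    have "\<forall>e\<in>E. inc e \<subseteq> V" using g unfolding graph_def by blast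
    then have "verts inc F \<subseteq> V" using FE unfolding verts_def by blast
    then show ?thesis unfolding is_subgraph_def using FE all_inc_sub[of F inc] by blast
  qed
  have vC2: "verts inc C = verts inc C' \<union> verts inc F" using vC unfolding U_def .
  show ?thesis
    apply (rule exI[where x=C'], rule exI[where x="verts inc F"], rule exI[where x=F])
    using circ' sg dj vC2 CU sh unfolding U_def by blast
qed

lemma part_two_dir2:
  assumes g: "graph V E inc" and CE: "C \<subseteq> E" and k2: "k \<ge> 2"
    and o: "Mk_circuit E inc (k - 1) C'" "is_subgraph V E inc W F" "F \<inter> C' = {}"
      "verts inc C = verts inc C' \<union> W" "C = C' \<union> F"
    and sh: "(\<exists>x y. is_path inc W F x y \<and> verts inc C' \<inter> W = {x, y}) \<or>
                (\<exists>x. is_lollipop inc W F x \<and> verts inc C' \<inter> W = {x}) \<or>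
                (is_cycle inc W F \<and> card (verts inc C' \<inter> W) = 1) \<or>
                (is_bicycle inc W F \<and> verts inc C' \<inter> W = {})"
  shows "Mk_circuit E inc k C"
proof -
  have k1: "k \<ge> 1" using k2 by simp
  have km: "k - 1 \<ge> 1" using k2 by simp
  have R': "C' \<subseteq> E" "C' \<noteq> {}" "exc inc C' = int (k - 1)" "\<forall>D. D \<subseteq> C' \<and> D \<noteq> C' \<longrightarrow> exc inc D < int (k - 1)"
    using circ_char[OF g km] o(1) by auto
  have FE: "F \<subseteq> E" using o(2) unfolding is_subgraph_def by blast
  have wfF: "wf_edges inc F" using graph_wf[OF g FE] .
  have wfC': "wf_edges inc C'" using graph_wf[OF g R'(1)] .
  define U where "U = verts inc C'"
  have G: "W = verts inc F \<and> int (card F) - int (card (W - U)) = 1 \<and>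
         (\<forall>D. D \<subseteq> F \<and> D \<noteq> F \<longrightarrow> card D \<le> card (verts inc D - U))"
    using shape_G[OF wfF, of W U] sh unfolding U_def by blast
  have WF: "W = verts inc F" and G1: "int (card F) - int (card (W - U)) = 1"
    and G2: "\<forall>D. D \<subseteq> F \<and> D \<noteq> F \<longrightarrow> card D \<le> card (verts inc D - U)" using G by auto
  have fF: "finite F" using wfF wf_finite by blast
  have fC': "finite C'" using wfC' wf_finite by blast
  have fU: "finite U" using verts_finite[OF wfC'] unfolding U_def .
  have cvu: "card (U \<union> X) = card U + card (X - U)" if "finite X" for X
  proof -
    have "U \<union> X = U \<union> (X - U)" by blast
    moreover have "U \<inter> (X - U) = {}" by blast
    ultimately show ?thesis using card_Un_disjoint[of U "X - U"] fU that by simp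
  qed
  have eC': "int (card C') - int (card U) = int k - 1" using R'(3) km unfolding exc_def U_def by simp
  have cC: "card C = card C' + card F" using card_Un_disjoint[OF fC' fF] o(3,5) by (simp add: Int_commute)
  have cVC: "card (verts inc C) = card U + card (W - U)"
    using o(4) cvu[of W] verts_finite[OF wfF] WF unfolding U_def by simp
  have eC: "exc inc C = int k" using cC cVC eC' G1 unfolding exc_def by linarith
  have Cne: "C \<noteq> {}" using R'(2) o(5) by blast
  have pr: "\<forall>D. D \<subseteq> C \<and> D \<noteq> C \<longrightarrow> exc inc D < int k"
  proof (intro allI impI)
    fix D assume D: "D \<subseteq> C \<and> D \<noteq> C"
    define D1 where "D1 = D \<inter> C'"
    define D2 where "D2 = D \<inter> F"
    have DD: "D = D1 \<union> D2" using D o(5) unfolding D1_def D2_def by blast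
    have fD1: "finite D1" using fC' unfolding D1_def by simp
    have fD2: "finite D2" using fF unfolding D2_def by simp
    have dj12: "D1 \<inter> D2 = {}" using o(3) unfolding D1_def D2_def by blast
    have cD: "card D = card D1 + card D2" using card_Un_disjoint[OF fD1 fD2 dj12] DD by simp
    have wfD1: "wf_edges inc D1" using wf_subset[OF wfC'] unfolding D1_def by blast
    have wfD2: "wf_edges inc D2" using wf_subset[OF wfF] unfolding D2_def by blast
    have vD: "verts inc D = verts inc D1 \<union> verts inc D2" using DD verts_Un[of inc D1 D2] by simp
    have vD1U: "verts inc D1 \<subseteq> U" using verts_mono[of D1 C' inc] unfolding U_def D1_def by blast
    have fvD: "finite (verts inc D)" using vD verts_finite[OF wfD1] verts_finite[OF wfD2] by simp
    have "verts inc D1 \<union> (verts inc D2 - U) \<subseteq> verts inc D" using vD by blast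
    moreover have "verts inc D1 \<inter> (verts inc D2 - U) = {}" using vD1U by blast
    ultimately have cvD: "card (verts inc D1) + card (verts inc D2 - U) \<le> card (verts inc D)"
      using card_Un_disjoint[of "verts inc D1" "verts inc D2 - U"] verts_finite[OF wfD1] verts_finite[OF wfD2]
        card_mono[OF fvD] by (metis finite_Diff)
    show "exc inc D < int k"
    proof (cases "D2 = F")
      case True
      have "D1 \<noteq> C'"
      proof
        assume "D1 = C'"
        then have "D = C" using DD True o(5) by simp
        then show False using D by simp
      qed
      moreover have "D1 \<subseteq> C'" unfolding D1_def by blast
      ultimately have "exc inc D1 < int (k - 1)" using R'(4) by blast
      moreover have "int (card D2) - int (card (verts inc D2 - U)) = 1" using G1 WF True by simp
      ultimately show ?thesis using cD cvD km unfolding exc_def by linarith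
    next
      case False
      have "D2 \<subseteq> F" unfolding D2_def by blast
      then have c2: "card D2 \<le> card (verts inc D2 - U)" using G2 False by blast
      have "exc inc D1 \<le> int (k - 1)"
      proof (cases "D1 = C'")
        case True
        then show ?thesis using R'(3) by simp
      next
        case False
        have "D1 \<subseteq> C'" unfolding D1_def by blast
        then have "exc inc D1 < int (k - 1)" using R'(4) False by blast
        then show ?thesis by simp
      qed
      then show ?thesis using cD cvD c2 km unfolding exc_def by linarith
    qed
  qed
  show ?thesis using circ_char[OF g k1] CE Cne eC pr by blast
qed

theorem mainTheorem9:
  fixes V :: "'v set" and E :: "'e set" and inc :: "'e \<Rightarrow> 'v set"
    and C :: "'e set" and k :: nat
  assumes "graph V E inc" and "C \<subseteq> E" and "k \<ge> 1"
  shows "(k = 1 \<longrightarrow> (Mk_circuit E inc 1 C \<longleftrightarrow> is_bicycle inc (verts inc C) C)) \<and>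
         (k \<ge> 2 \<longrightarrow> (Mk_circuit E inc k C \<longleftrightarrow>
            (\<exists>C' W F. Mk_circuit E inc (k - 1) C' \<and> is_subgraph V E inc W F \<and> F \<inter> C' = {} \<and>
               verts inc C = verts inc C' \<union> W \<and> C = C' \<union> F \<and>
               ((\<exists>x y. is_path inc W F x y \<and> verts inc C' \<inter> W = {x, y}) \<or>
                (\<exists>x. is_lollipop inc W F x \<and> verts inc C' \<inter> W = {x}) \<or>
                (is_cycle inc W F \<and> card (verts inc C' \<inter> W) = 1) \<or>
                (is_bicycle inc W F \<and> verts inc C' \<inter> W = {})))))"
proof (intro conjI impI)
  show "Mk_circuit E inc 1 C \<longleftrightarrow> is_bicycle inc (verts inc C) C"
    by (rule part_one[OF assms(1,2)])
next
  assume k2: "k \<ge> 2"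
  show "Mk_circuit E inc k C \<longleftrightarrow>
            (\<exists>C' W F. Mk_circuit E inc (k - 1) C' \<and> is_subgraph V E inc W F \<and> F \<inter> C' = {} \<and>
               verts inc C = verts inc C' \<union> W \<and> C = C' \<union> F \<and>
               ((\<exists>x y. is_path inc W F x y \<and> verts inc C' \<inter> W = {x, y}) \<or>
                (\<exists>x. is_lollipop inc W F x \<and> verts inc C' \<inter> W = {x}) \<or>
                (is_cycle inc W F \<and> card (verts inc C' \<inter> W) = 1) \<or>
                (is_bicycle inc W F \<and> verts inc C' \<inter> W = {})))"
  proof
    assume "Mk_circuit E inc k C"
    then show "\<exists>C' W F. Mk_circuit E inc (k - 1) C' \<and> is_subgraph V E inc W F \<and> F \<inter> C' = {} \<and>
               verts inc C = verts inc C' \<union> W \<and> C = C' \<union> F \<and>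
               ((\<exists>x y. is_path inc W F x y \<and> verts inc C' \<inter> W = {x, y}) \<or>
                (\<exists>x. is_lollipop inc W F x \<and> verts inc C' \<inter> W = {x}) \<or>
                (is_cycle inc W F \<and> card (verts inc C' \<inter> W) = 1) \<or>
                (is_bicycle inc W F \<and> verts inc C' \<inter> W = {}))"
      by (rule part_two_dir1[OF assms(1,2) k2])
  next
    assume "\<exists>C' W F. Mk_circuit E inc (k - 1) C' \<and> is_subgraph V E inc W F \<and> F \<inter> C' = {} \<and>
               verts inc C = verts inc C' \<union> W \<and> C = C' \<union> F \<and>
               ((\<exists>x y. is_path inc W F x y \<and> verts inc C' \<inter> W = {x, y}) \<or>
                (\<exists>x. is_lollipop inc W F x \<and> verts inc C' \<inter> W = {x}) \<or>
                (is_cycle inc W F \<and> card (verts inc C' \<inter> W) = 1) \<or>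
                (is_bicycle inc W F \<and> verts inc C' \<inter> W = {}))"
    then obtain C' W F where o: "Mk_circuit E inc (k - 1) C'" "is_subgraph V E inc W F" "F \<inter> C' = {}"
      "verts inc C = verts inc C' \<union> W" "C = C' \<union> F"
      and sh: "(\<exists>x y. is_path inc W F x y \<and> verts inc C' \<inter> W = {x, y}) \<or>
                (\<exists>x. is_lollipop inc W F x \<and> verts inc C' \<inter> W = {x}) \<or>
                (is_cycle inc W F \<and> card (verts inc C' \<inter> W) = 1) \<or>
                (is_bicycle inc W F \<and> verts inc C' \<inter> W = {})"
      by blast
    show "Mk_circuit E inc k C" by (rule part_two_dir2[OF assms(1,2) k2 o sh])
  qed
qed

end
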